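(* Define, for $f$ analytic near $0$, $(Af)(p)=\sqrt p\,\frac{d}{dp}\int_0^p\frac{f(s)\,ds}{\sqrt{p-s}}$. (i) If $f(p)=\sum_{k\ge0}c_kp^k$ converges in the unit disk $\mathbb D$, then $(Af)(p)=\sqrt\pi\sum_{k\ge0}\frac{\Gamma(k+1)}{\Gamma(k+\frac12)}c_kp^k$, convergent in $\mathbb D$. (ii) If $\mathcal D\supset\mathbb D$ is star-shaped with respect to $0$ and $f$ is analytic in $\mathcal D$, then $Af$ is analytic in $\mathcal D$. (iii) For each $x\in[-1,1]$, $A\big((1-px)^{-1/2}\big)=\frac{1}{1-px}$ for all $p$ with $p^{-1}\notin[-1,1]$. (iv) Consequently, for $\mu$ Hölder continuous on $[-1,1]$ and $Q(p)=\int_{-1}^1\frac{\mu(x)dx}{\sqrt{1-px}}$, one has $(AQ)(p)=\int_{-1}^1\frac{\mu(x)dx}{1-px}$ for $p^{-1}\notin[-1,1]$, and with $\zeta=1/p$, the boundary values $AQ^\pm$ of $\zeta\int_{-1}^1\frac{\mu(x)dx}{\zeta-x}$ on $(-1,0)\cup(0,1)$ from the upper/lower half plane satisfy $AQ^+(x)-AQ^-(x)=-2\pi i\,x\,\mu(x)$.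
   Context: $\sqrt p$ and $(1-px)^{-1/2}$ denote principal branches; the potential $V(z)=\int_{-1}^1\mu(x)(z^2-2zx+1)^{-1/2}dx$ satisfies $V(z)=(z^2+1)^{-1/2}Q(p)$ with $p=2z/(z^2+1)$. *)

theory Defs
  imports "HOL-Complex_Analysis.Complex_Analysis"
begin

definition Iop :: "(complex \<Rightarrow> complex) \<Rightarrow> complex \<Rightarrow> complex" where
  "Iop f p = contour_integral (linepath 0 p) (\<lambda>s. f s / csqrt (p - s))"

text \<open>sqrt p times d/dp of Iop f at p (p nonzero); the derivative is taken along the ray
  through p (it agrees with the complex derivative wherever the latter exists).\<close>
definition Aop0 :: "(complex \<Rightarrow> complex) \<Rightarrow> complex \<Rightarrow> complex" where
  "Aop0 f p = csqrt p * (vector_derivative (\<lambda>r::real. Iop f (complex_of_real r * p)) (at 1) / p)"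

definition Aop :: "(complex \<Rightarrow> complex) \<Rightarrow> complex \<Rightarrow> complex" where
  "Aop f p = (if p = 0 then Lim (at 0) (Aop0 f) else Aop0 f p)"

definition holder_on :: "real set \<Rightarrow> (real \<Rightarrow> real) \<Rightarrow> bool" where
  "holder_on S g \<longleftrightarrow> (\<exists>C \<alpha>. 0 < \<alpha> \<and> \<alpha> \<le> 1 \<and>
      (\<forall>x\<in>S. \<forall>y\<in>S. \<bar>g x - g y\<bar> \<le> C * \<bar>x - y\<bar> powr \<alpha>))"

end

theory Submission
  imports Defs
begin

lemma csqrt_scale:
  assumes "a \<ge> 0"
  shows "csqrt (complex_of_real a * z) = complex_of_real (sqrt a) * csqrt z"
proof (cases "a = 0")
  case True then show ?thesis by simp
next
  case False
  with assms have a: "a > 0" by simp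
  show ?thesis
  proof (rule csqrt_unique)
    show "(complex_of_real (sqrt a) * csqrt z)\<^sup>2 = complex_of_real a * z"
      using a by (simp add: power_mult_distrib power2_csqrt flip: of_real_power)
    show "0 < Re (complex_of_real (sqrt a) * csqrt z) \<or>
      Re (complex_of_real (sqrt a) * csqrt z) = 0 \<and> 0 \<le> Im (complex_of_real (sqrt a) * csqrt z)"
      using csqrt_principal[of z] a by auto
  qed
qed

definition Hf :: "(complex \<Rightarrow> complex) \<Rightarrow> complex \<Rightarrow> complex" where
  "Hf f q = integral {0..1} (\<lambda>t. complex_of_real (sqrt (1-t)) * deriv f (complex_of_real t * q))"

lemma seg_mem: "closed_segment 0 q \<subseteq> S \<Longrightarrow> t \<in> {0..1} \<Longrightarrow> complex_of_real t * q \<in> S"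
  by (auto simp: closed_segment_def scaleR_conv_of_real)

lemma comp_vd:
  assumes "f holomorphic_on S" "open S" "complex_of_real t * q \<in> S"
  shows "((\<lambda>t. f (complex_of_real t * q)) has_vector_derivative (q * deriv f (complex_of_real t * q))) (at t within T)"
proof -
  have a: "((\<lambda>t. complex_of_real t * q) has_vector_derivative q) (at t within T)"
    using has_vector_derivative_mult_left[OF has_vector_derivative_of_real[OF DERIV_ident], of q]
    by simp
  have "((\<lambda>t. f (complex_of_real t * q)) has_derivative (\<lambda>h. h *\<^sub>R (q * deriv f (complex_of_real t * q)))) (at t within T)"
    using has_derivative_in_compose[OF a[unfolded has_vector_derivative_def]
       holomorphic_derivI[OF assms, of "(\<lambda>t. complex_of_real t * q) ` T", unfolded has_field_derivative_def]]
    by (simp add: o_def scaleR_conv_of_real ac_simps)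
  then show ?thesis by (simp add: has_vector_derivative_def)
qed

lemma cont_deriv_seg:
  assumes "f holomorphic_on S" "open S" "closed_segment 0 q \<subseteq> S"
  shows "continuous_on {0..1} (\<lambda>t. deriv f (complex_of_real t * q))"
proof -
  have "continuous_on S (deriv f)"
    using holomorphic_deriv[OF assms(1,2)] holomorphic_on_imp_continuous_on by blast
  moreover have "continuous_on {0..1} (\<lambda>t. complex_of_real t * q)"
    by (intro continuous_intros)
  moreover have "(\<lambda>t. complex_of_real t * q) ` {0..1} \<subseteq> S"
    using seg_mem[OF assms(3)] by auto
  ultimately show ?thesis
    by (rule continuous_on_compose2)
qed

lemma cont_f_seg:
  assumes "f holomorphic_on S" "open S" "closed_segment 0 q \<subseteq> S"
  shows "continuous_on {0..1} (\<lambda>t. f (complex_of_real t * q))"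
proof -
  have "continuous_on S f"
    using assms(1) holomorphic_on_imp_continuous_on by blast
  moreover have "continuous_on {0..1} (\<lambda>t. complex_of_real t * q)"
    by (intro continuous_intros)
  moreover have "(\<lambda>t. complex_of_real t * q) ` {0..1} \<subseteq> S"
    using seg_mem[OF assms(3)] by auto
  ultimately show ?thesis
    by (rule continuous_on_compose2)
qed

lemma Hf_integral:
  assumes "f holomorphic_on S" "open S" "closed_segment 0 q \<subseteq> S"
  shows "((\<lambda>t. complex_of_real (sqrt (1-t)) * deriv f (complex_of_real t * q)) has_integral Hf f q) {0..1}"
proof -
  have "continuous_on {0..1} (\<lambda>t. complex_of_real (sqrt (1-t)) * deriv f (complex_of_real t * q))"
    by (intro continuous_intros cont_deriv_seg[OF assms])
  then show ?thesis unfolding Hf_def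
    using integrable_continuous_interval integrable_integral by blast
qed

lemma Iop_repr:
  assumes "f holomorphic_on S" "open S" "closed_segment 0 q \<subseteq> S"
  shows "Iop f q = csqrt q * (2 * f 0 + 2 * q * Hf f q)"
proof -
  define G where "G t = - 2 * complex_of_real (sqrt (1-t)) * f (complex_of_real t * q)" for t
  define G' where "G' t = f (complex_of_real t * q) / complex_of_real (sqrt (1-t))
        - 2 * complex_of_real (sqrt (1-t)) * (q * deriv f (complex_of_real t * q))" for t
  have "(G' has_integral (G 1 - G 0)) {0..1}"
  proof (rule fundamental_theorem_of_calculus_interior)
    show "continuous_on {0..1} G" unfolding G_def
      by (intro continuous_intros cont_f_seg[OF assms])
    fix t :: real assume t: "t \<in> {0<..<1}"
    have s: "((\<lambda>t. complex_of_real (sqrt (1-t))) has_vector_derivative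
              complex_of_real (- 1 / (2 * sqrt (1-t)))) (at t)"
    proof (rule has_vector_derivative_of_real)
      show "((\<lambda>t. sqrt (1-t)) has_real_derivative (- 1 / (2 * sqrt (1-t)))) (at t)"
        using t by (auto intro!: derivative_eq_intros simp: divide_simps)
    qed
    have "(G has_vector_derivative
        (- 2 * complex_of_real (sqrt (1-t)) * (q * deriv f (complex_of_real t * q))
          + (- 2 * complex_of_real (- 1 / (2 * sqrt (1-t)))) * f (complex_of_real t * q))) (at t)"
      unfolding G_def
      using has_vector_derivative_mult[OF has_vector_derivative_mult_right[OF s, of "-2"]
          comp_vd[OF assms(1,2) seg_mem[OF assms(3)]]] t
      by (simp add: algebra_simps)
    moreover have "(- 2 * complex_of_real (sqrt (1-t)) * (q * deriv f (complex_of_real t * q))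
          + (- 2 * complex_of_real (- 1 / (2 * sqrt (1-t)))) * f (complex_of_real t * q)) = G' t"
      proof -
      have "(- 2 * complex_of_real (- 1 / (2 * sqrt (1-t)))) * f (complex_of_real t * q) =
          f (complex_of_real t * q) / complex_of_real (sqrt (1-t))"
        by (simp add: of_real_divide divide_simps)
      then show ?thesis unfolding G'_def by (simp add: algebra_simps)
    qed
    ultimately show "(G has_vector_derivative G' t) (at t)" by simp
  qed simp
  moreover have "G 1 - G 0 = 2 * f 0" unfolding G_def by simp
  ultimately have i1: "(G' has_integral 2 * f 0) {0..1}" by simp
  have i2: "((\<lambda>t. 2 * q * (complex_of_real (sqrt (1-t)) * deriv f (complex_of_real t * q))) has_integral 2 * q * Hf f q) {0..1}"
    using has_integral_mult_right[OF Hf_integral[OF assms]] .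
  have i3: "((\<lambda>t. f (complex_of_real t * q) / complex_of_real (sqrt (1-t))) has_integral (2 * f 0 + 2 * q * Hf f q)) {0..1}"
    using has_integral_add[OF i1 i2] unfolding G'_def by (simp add: algebra_simps)
  have i4: "((\<lambda>t. csqrt q * (f (complex_of_real t * q) / complex_of_real (sqrt (1-t)))) has_integral csqrt q * (2 * f 0 + 2 * q * Hf f q)) {0..1}"
    using has_integral_mult_right[OF i3] .
  have eq: "(\<lambda>s. f s / csqrt (q - s)) (linepath 0 q t) * (q - 0) =
      csqrt q * (f (complex_of_real t * q) / complex_of_real (sqrt (1-t)))" if t: "t \<in> {0..1}" for t
  proof -
    have l: "linepath 0 q t = complex_of_real t * q" by (simp add: linepath_def scaleR_conv_of_real)
    have "q - complex_of_real t * q = complex_of_real (1 - t) * q" by (simp add: algebra_simps)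
    then have c: "csqrt (q - complex_of_real t * q) = complex_of_real (sqrt (1-t)) * csqrt q"
      using t csqrt_scale[of "1-t" q] by simp
    have qq: "q = csqrt q * csqrt q" using power2_csqrt[of q] by (simp add: power2_eq_square)
    show ?thesis unfolding l c
      by (subst (3) qq) (simp add: field_simps)
  qed
  have "((\<lambda>s. f s / csqrt (q - s)) has_contour_integral csqrt q * (2 * f 0 + 2 * q * Hf f q)) (linepath 0 q)"
    unfolding has_contour_integral_linepath
    by (rule has_integral_eq[OF _ i4]) (use eq in simp)
  then show ?thesis unfolding Iop_def by (rule contour_integral_unique)
qed


lemma seg_nbhd:
  assumes "open D" "closed_segment 0 z \<subseteq> D"
  obtains e where "e > 0" "\<And>w t. w \<in> ball z e \<Longrightarrow> t \<in> {0..1} \<Longrightarrow> complex_of_real t * w \<in> D"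
proof -
  obtain e where e: "e > 0" "{x. infdist x (closed_segment 0 z) \<le> e} \<subseteq> D"
    using compact_in_open_separated[of "closed_segment 0 z" D] assms by auto
  show ?thesis
  proof (rule that[OF e(1)])
    fix w t assume w: "w \<in> ball z e" and t: "t \<in> {0..1::real}"
    have m: "complex_of_real t * z \<in> closed_segment 0 z" using seg_mem[of z _ t] t by auto
    have "dist (complex_of_real t * w) (complex_of_real t * z) = t * dist w z"
      using t by (simp add: dist_norm norm_mult flip: right_diff_distrib)
    also have "\<dots> \<le> dist w z" using t by (simp add: mult_left_le_one_le)
    also have "\<dots> < e" using w by (simp add: dist_commute)
    finally have "infdist (complex_of_real t * w) (closed_segment 0 z) \<le> e"
      using infdist_le[OF m, of "complex_of_real t * w"] by linarith
    then show "complex_of_real t * w \<in> D" using e(2) by auto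
  qed
qed

lemma holomorphic_on_local:
  assumes "open D" "\<And>z. z \<in> D \<Longrightarrow> \<exists>e>0. g holomorphic_on ball z e"
  shows "g holomorphic_on D"
  unfolding holomorphic_on_def
proof
  fix z assume z: "z \<in> D"
  obtain e where e: "e > 0" "g holomorphic_on ball z e" using assms(2)[OF z] by blast
  then have "g field_differentiable at z"
    using holomorphic_on_imp_differentiable_at[of g "ball z e" z] by auto
  then show "g field_differentiable at z within D" using field_differentiable_at_within by blast
qed

lemma Hf_holo:
  assumes f: "f holomorphic_on D" and D: "open D" and st: "\<And>z. z \<in> D \<Longrightarrow> closed_segment 0 z \<subseteq> D"
  shows "Hf f holomorphic_on D"
proof (rule holomorphic_on_local[OF D])
  fix z assume z: "z \<in> D"
  obtain e where e: "e > 0" "\<And>w t. w \<in> ball z e \<Longrightarrow> t \<in> {0..1} \<Longrightarrow> complex_of_real t * w \<in> D"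
    using seg_nbhd[OF D st[OF z]] by blast
  have df: "deriv f holomorphic_on D" using holomorphic_deriv[OF f D] .
  have ddf: "deriv (deriv f) holomorphic_on D" using holomorphic_deriv[OF df D] .
  have cdf: "continuous_on D (deriv f)" using df holomorphic_on_imp_continuous_on by blast
  have cddf: "continuous_on D (deriv (deriv f))" using ddf holomorphic_on_imp_continuous_on by blast
  define F where "F x t = complex_of_real (sqrt (1-t)) * deriv f (complex_of_real t * x)" for x t
  define Fx where "Fx x t = complex_of_real (sqrt (1-t)) * (deriv (deriv f) (complex_of_real t * x) * complex_of_real t)" for x t
  have "(\<lambda>x. integral (cbox 0 1) (F x)) holomorphic_on ball z e"
  proof (rule leibniz_rule_holomorphic)
    fix x t assume x: "x \<in> ball z e" and t: "t \<in> cbox (0::real) 1"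
    have m: "complex_of_real t * x \<in> D" using e(2)[OF x] t by auto
    have "((\<lambda>x. deriv f (complex_of_real t * x)) has_field_derivative
        deriv (deriv f) (complex_of_real t * x) * complex_of_real t) (at x within ball z e)"
      using DERIV_chain2[where f="deriv f" and g="\<lambda>x. complex_of_real t * x", OF holomorphic_derivI[OF df D m, of UNIV]]
      by (auto intro!: derivative_eq_intros)
    then show "((\<lambda>x. F x t) has_field_derivative Fx x t) (at x within ball z e)"
      unfolding F_def Fx_def by (rule DERIV_cmult)
  next
    fix x assume x: "x \<in> ball z e"
    have "continuous_on {0..1} (F x)" unfolding F_def
    proof (intro continuous_intros)
      show "continuous_on {0..1} (\<lambda>t. deriv f (complex_of_real t * x))"
        by (rule continuous_on_compose2[OF cdf]) (auto intro!: continuous_intros e(2)[OF x])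
    qed
    then show "F x integrable_on cbox 0 1" by (simp add: integrable_continuous_interval)
  next
    have "continuous_on (ball z e \<times> cbox 0 1) (\<lambda>(x, t). deriv (deriv f) (complex_of_real t * x))"
    proof -
      have "continuous_on (ball z e \<times> cbox 0 1) (\<lambda>xt. complex_of_real (snd xt) * fst xt)"
        by (auto intro!: continuous_intros)
      moreover have "(\<lambda>xt. complex_of_real (snd xt) * fst xt) ` (ball z e \<times> cbox 0 1) \<subseteq> D"
        using e(2) by auto
      ultimately have "continuous_on (ball z e \<times> cbox 0 1) (\<lambda>xt. deriv (deriv f) (complex_of_real (snd xt) * fst xt))"
        using continuous_on_compose2[OF cddf] by blast
      then show ?thesis by (simp add: case_prod_unfold)
    qed
    then show "continuous_on (ball z e \<times> cbox 0 1) (\<lambda>(x, t). Fx x t)" unfolding Fx_def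
      by (auto intro!: continuous_intros simp: case_prod_unfold)
  qed simp
  moreover have "integral (cbox 0 1) (F x) = Hf f x" for x
    by (simp add: Hf_def F_def[abs_def])
  ultimately show "\<exists>e>0. Hf f holomorphic_on ball z e" using e(1) by auto
qed

lemma Aop0_via:
  assumes G: "G holomorphic_on U" and U: "open U" "p \<in> U" and p: "p \<noteq> 0"
    and rep: "\<And>q. q \<in> U \<Longrightarrow> Iop f q = csqrt q * G q"
  shows "Aop0 f p = G p / 2 + p * deriv G p"
proof -
  define V where "V = {0<..} \<inter> (\<lambda>r::real. complex_of_real r * p) -` U"
  have oV: "open V" unfolding V_def
    by (intro open_Int open_greaterThan continuous_open_vimage U) (auto intro!: continuous_intros)
  have 1: "1 \<in> V" using U by (simp add: V_def)
  have s: "((\<lambda>r. complex_of_real (sqrt r)) has_vector_derivative complex_of_real (1/2)) (at 1)"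
  proof (rule has_vector_derivative_of_real)
    show "(sqrt has_real_derivative 1 / 2) (at 1)"
      using DERIV_real_sqrt[of 1] by simp
  qed
  have g: "((\<lambda>r. G (complex_of_real r * p)) has_vector_derivative (p * deriv G p)) (at 1)"
    using comp_vd[OF G U(1), of 1 p] U by simp
  have d: "((\<lambda>r. complex_of_real (sqrt r) * csqrt p * G (complex_of_real r * p)) has_vector_derivative
      (csqrt p * (p * deriv G p) + csqrt p * (G p / 2))) (at 1)"
    using has_vector_derivative_mult[OF has_vector_derivative_mult_left[OF s, of "csqrt p"] g]
    by (simp add: algebra_simps)
  have d2: "((\<lambda>r. Iop f (complex_of_real r * p)) has_vector_derivative
      (csqrt p * (p * deriv G p) + csqrt p * (G p / 2))) (at 1)"
  proof (rule has_vector_derivative_transform_within_open[OF d oV 1])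
    fix r assume r: "r \<in> V"
    then have "r > 0" "complex_of_real r * p \<in> U" by (auto simp: V_def)
    then show "complex_of_real (sqrt r) * csqrt p * G (complex_of_real r * p) = Iop f (complex_of_real r * p)"
      using rep csqrt_scale[of r p] by simp
  qed
  have "Aop0 f p = csqrt p * ((csqrt p * (p * deriv G p) + csqrt p * (G p / 2)) / p)"
    unfolding Aop0_def using vector_derivative_at[OF d2] by simp
  also have "\<dots> = (csqrt p * csqrt p) * (p * deriv G p + G p / 2) / p"
    by (simp add: algebra_simps)
  also have "\<dots> = G p / 2 + p * deriv G p"
    using p power2_csqrt[of p] by (simp add: power2_eq_square field_simps)
  finally show ?thesis .
qed


definition Gf :: "(complex \<Rightarrow> complex) \<Rightarrow> complex \<Rightarrow> complex" where
  "Gf f q = 2 * f 0 + 2 * q * Hf f q"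

definition Kf :: "(complex \<Rightarrow> complex) \<Rightarrow> complex \<Rightarrow> complex" where
  "Kf f p = Gf f p / 2 + p * deriv (Gf f) p"

lemma Gf_holo:
  assumes "f holomorphic_on D" "open D" "\<And>z. z \<in> D \<Longrightarrow> closed_segment 0 z \<subseteq> D"
  shows "Gf f holomorphic_on D"
  unfolding Gf_def[abs_def] using Hf_holo[OF assms] by (intro holomorphic_intros) auto

lemma Kf_holo:
  assumes "f holomorphic_on D" "open D" "\<And>z. z \<in> D \<Longrightarrow> closed_segment 0 z \<subseteq> D"
  shows "Kf f holomorphic_on D"
  unfolding Kf_def[abs_def] using Gf_holo[OF assms] holomorphic_deriv[OF Gf_holo[OF assms] assms(2)]
  by (intro holomorphic_intros) (auto simp: assms(2))

lemma Kf_0: "Kf f 0 = f 0"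
  by (simp add: Kf_def Gf_def)

lemma Aop_eq_Kf:
  assumes f: "f holomorphic_on D" and D: "open D" and st: "\<And>z. z \<in> D \<Longrightarrow> closed_segment 0 z \<subseteq> D"
    and "0 \<in> D" and p: "p \<in> D"
  shows "Aop f p = Kf f p"
proof -
  have A0: "Aop0 f q = Kf f q" if "q \<in> D" "q \<noteq> 0" for q
    unfolding Kf_def
    by (rule Aop0_via[OF Gf_holo[OF f D st] D that])
       (use Iop_repr[OF f D st] in \<open>auto simp add: Gf_def\<close>)
  show ?thesis
  proof (cases "p = 0")
    case False then show ?thesis using A0 p by (simp add: Aop_def)
  next
    case True
    have "continuous (at 0) (Kf f)"
      using Kf_holo[OF f D st] D \<open>0 \<in> D\<close>
      by (meson continuous_on_eq_continuous_at holomorphic_on_imp_continuous_on)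
    then have "(Kf f \<longlongrightarrow> Kf f 0) (at 0)" by (simp add: isCont_def)
    moreover have "eventually (\<lambda>q. Kf f q = Aop0 f q) (at 0)"
    proof -
      have "eventually (\<lambda>q. q \<in> D) (at 0)"
        using D \<open>0 \<in> D\<close> eventually_at_topological by blast
      moreover have "eventually (\<lambda>q. q \<noteq> 0) (at (0::complex))"
        by (simp add: eventually_at_filter)
      ultimately show ?thesis by eventually_elim (simp add: A0)
    qed
    ultimately have "(Aop0 f \<longlongrightarrow> Kf f 0) (at 0)" by (rule Lim_transform_eventually)
    then show ?thesis using True by (simp add: Aop_def tendsto_Lim)
  qed
qed

lemma part2:
  assumes "open D" "ball 0 1 \<subseteq> D" "\<forall>z\<in>D. closed_segment 0 z \<subseteq> D" "f analytic_on D"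
  shows "Aop f analytic_on D"
proof -
  have f: "f holomorphic_on D" using assms(1,4) analytic_on_open by blast
  have 0: "0 \<in> D" using assms(2) by auto
  have "Aop f holomorphic_on D"
    by (rule holomorphic_transform[OF Kf_holo[OF f assms(1)]])
       (use assms Aop_eq_Kf[OF f assms(1) _ 0] in auto)
  then show ?thesis using assms(1) analytic_on_open by blast
qed


lemma series_integral_01:
  fixes g :: "nat \<Rightarrow> real \<Rightarrow> complex"
  assumes cont: "\<And>n. continuous_on {0..1} (g n)"
    and bnd: "\<And>n t. t \<in> {0..1} \<Longrightarrow> norm (g n t) \<le> M n" and sM: "summable M"
  shows "(\<lambda>n. integral {0..1} (g n)) sums integral {0..1} (\<lambda>t. \<Sum>n. g n t)"
proof -
  have u: "uniform_limit {0..1} (\<lambda>n t. \<Sum>i<n. g i t) (\<lambda>t. \<Sum>i. g i t) sequentially"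
    by (rule Weierstrass_m_test[OF bnd sM])
  have c: "continuous_on {0..1} (\<lambda>t. \<Sum>i<n. g i t)" for n
    by (intro continuous_on_sum cont)
  obtain I J where I: "\<And>n. ((\<lambda>t. \<Sum>i<n. g i t) has_integral I n) {0..1}"
    and J: "((\<lambda>t. \<Sum>i. g i t) has_integral J) {0..1}" and IJ: "I \<longlonglongrightarrow> J"
    using uniform_limit_integral[OF u c] by auto
  have gi: "(g i has_integral integral {0..1} (g i)) {0..1}" for i
    using cont integrable_continuous_interval integrable_integral by blast
  have "((\<lambda>t. \<Sum>i<n. g i t) has_integral (\<Sum>i<n. integral {0..1} (g i))) {0..1}" for n
    by (rule has_integral_sum) (use gi in auto)
  then have "I n = (\<Sum>i<n. integral {0..1} (g i))" for n
    using I has_integral_unique by blast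
  then have Ieq: "I = (\<lambda>n. \<Sum>i<n. integral {0..1} (g i))" by (rule ext)
  have "integral {0..1} (\<lambda>t. \<Sum>n. g n t) = J" by (rule integral_unique[OF J])
  then show ?thesis using IJ unfolding sums_def Ieq by simp
qed

lemma powser_ball_deriv:
  fixes a :: "nat \<Rightarrow> complex"
  assumes S: "\<And>z. norm z < 1 \<Longrightarrow> (\<lambda>k. a k * z^k) sums F z" and z: "norm z < 1"
  shows "(F has_field_derivative (\<Sum>n. diffs a n * z^n)) (at z)"
    and "(\<lambda>n. diffs a n * z^n) sums (\<Sum>n. diffs a n * z^n)"
proof -
  have sm: "\<And>z. norm z < 1 \<Longrightarrow> summable (\<lambda>k. a k * z^k)" using S sums_summable by blast
  have d: "((\<lambda>z. \<Sum>n. a n * z^n) has_field_derivative (\<Sum>n. diffs a n * z^n)) (at z)"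
    using termdiffs_strong'[of 1 a z] sm z by blast
  show "(F has_field_derivative (\<Sum>n. diffs a n * z^n)) (at z)"
    by (rule has_field_derivative_transform_within_open[OF d, of "ball 0 1"])
       (use z S in \<open>auto simp: sums_iff\<close>)
  show "(\<lambda>n. diffs a n * z^n) sums (\<Sum>n. diffs a n * z^n)"
    using termdiff_converges[OF z sm] summable_sums by blast
qed

lemma beta_int:
  "((\<lambda>t. t ^ n * sqrt (1-t)) has_integral Beta (real n + 1) (3/2)) {0..1}"
proof -
  have h: "((\<lambda>t. t powr (real n + 1 - 1) * (1 - t) powr (3/2 - 1)) has_integral Beta (real n + 1) (3/2)) {0..1}"
    by (rule has_integral_Beta_real) auto
  show ?thesis
  proof (rule has_integral_spike_finite[OF _ _ h, of "{0}"])
    fix t assume "t \<in> {0..1} - {0::real}"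
    then have "t > 0" "1 - t \<ge> 0" by auto
    then show "t ^ n * sqrt (1-t) = t powr (real n + 1 - 1) * (1 - t) powr (3/2 - 1)"
      using powr_realpow[of t n] powr_half_sqrt[of "1-t"] by simp
  qed simp
qed

lemma pos_not_nonpos_Int: "(x::real) > 0 \<Longrightarrow> x \<notin> \<int>\<^sub>\<le>\<^sub>0"
  by (auto elim!: nonpos_Ints_cases)

lemma gamma_coef:
  "(real n + 3/2) * 2 * (real n + 1) * Beta (real n + 1) (3/2) =
     sqrt pi * Gamma (real (Suc n) + 1) / Gamma (real (Suc n) + 1/2)"
proof -
  have g1: "Gamma (real n + 5/2) = (real n + 3/2) * Gamma (real n + 3/2)"
    using Gamma_plus1[OF pos_not_nonpos_Int, of "real n + 3/2"] by (simp add: add.assoc)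
  have g2: "Gamma (3/2::real) = 1/2 * sqrt pi"
    using Gamma_plus1[OF pos_not_nonpos_Int, of "1/2::real"] Gamma_one_half_real by simp
  have g3: "Gamma (real n + 2) = (real n + 1) * Gamma (real n + 1)"
    using Gamma_plus1[OF pos_not_nonpos_Int, of "real n + 1"] by (simp add: add.assoc)
  have p: "Gamma (real n + 3/2) > 0" by simp
  have ar: "\<And>aa bb xx cc::real. bb > 0 \<Longrightarrow> xx \<ge> 0 \<Longrightarrow>
      (xx+3/2)*2*(xx+1)*(aa*(1/2*cc)/((xx+3/2)*bb)) = cc*((xx+1)*aa)/bb"
  proof -
  fix aa bb xx cc :: real assume a: "bb > 0" "xx \<ge> 0"
  then have nz: "xx + 3/2 \<noteq> 0" by linarith
  have e: "(xx+3/2)*(aa*(1/2*cc)/((xx+3/2)*bb)) = aa*(1/2*cc)/bb" using nz by simp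
  have "(xx+3/2)*2*(xx+1)*(aa*(1/2*cc)/((xx+3/2)*bb)) = 2*(xx+1)*((xx+3/2)*(aa*(1/2*cc)/((xx+3/2)*bb)))"
    by (simp only: ac_simps)
  also have "\<dots> = cc*((xx+1)*aa)/bb" unfolding e using a by (simp add: field_simps)
  finally show "(xx+3/2)*2*(xx+1)*(aa*(1/2*cc)/((xx+3/2)*bb)) = cc*((xx+1)*aa)/bb" .
qed
  have "Beta (real n + 1) (3/2) = Gamma (real n + 1) * (1/2 * sqrt pi) / ((real n + 3/2) * Gamma (real n + 3/2))"
    unfolding Beta_def g2 using g1 by (simp add: add.assoc)
  moreover have "real (Suc n) + 1 = real n + 2" "real (Suc n) + 1/2 = real n + 3/2" by simp_all
  ultimately have "(real n + 3/2) * 2 * (real n + 1) * Beta (real n + 1) (3/2) =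
     sqrt pi * Gamma (real n + 2) / Gamma (real n + 3/2)"
    using g3 ar[OF p, of "real n" "Gamma (real n + 1)" "sqrt pi"] by simp
  moreover have "real (Suc n) + 1 = real n + 2" "real (Suc n) + 1/2 = real n + 3/2" by simp_all
  ultimately show ?thesis by (simp only:)
qed


definition dc :: "(nat \<Rightarrow> complex) \<Rightarrow> nat \<Rightarrow> complex" where
  "dc c k = (case k of 0 \<Rightarrow> 2 * c 0 | Suc n \<Rightarrow> 2 * diffs c n * complex_of_real (Beta (real n + 1) (3/2)))"

lemma ball_star: "z \<in> ball (0::complex) 1 \<Longrightarrow> closed_segment 0 z \<subseteq> ball 0 1"
  by (rule closed_segment_subset) auto

lemma summable_norm_inside:
  fixes a :: "nat \<Rightarrow> complex"
  assumes sm: "\<And>z. norm z < 1 \<Longrightarrow> summable (\<lambda>k. a k * z^k)" and q: "norm q < 1"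
  shows "summable (\<lambda>n. norm (a n * q^n))"
proof -
  define r where "r = (1 + norm q) / 2"
  have r0: "r > 0" unfolding r_def by (simp add: add_pos_nonneg)
  then have n: "norm (complex_of_real r) = r" by simp
  have r: "norm q < norm (complex_of_real r)" "norm (complex_of_real r) < 1"
    unfolding n using q by (auto simp: r_def)
  show ?thesis by (rule powser_insidea[OF sm[OF r(2)] r(1)])
qed

context
  fixes f :: "complex \<Rightarrow> complex" and c :: "nat \<Rightarrow> complex"
  assumes S: "\<forall>p\<in>ball 0 1. (\<lambda>k. c k * p ^ k) sums f p"
begin

lemma S': "norm z < 1 \<Longrightarrow> (\<lambda>k. c k * z ^ k) sums f z"
  using S by auto

lemma smc: "norm z < 1 \<Longrightarrow> summable (\<lambda>k. c k * z ^ k)"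
  using S' sums_summable by blast

lemma f_deriv: "norm z < 1 \<Longrightarrow> deriv f z = (\<Sum>n. diffs c n * z^n)"
  using powser_ball_deriv(1)[OF S'] DERIV_imp_deriv by blast

lemma f_holo: "f holomorphic_on ball 0 1"
  unfolding holomorphic_on_def field_differentiable_def
  using powser_ball_deriv(1)[OF S'] has_field_derivative_at_within by fastforce

lemma f0: "f 0 = c 0"
  using S'[of 0] powser_sums_zero[of c] sums_unique2 by auto

lemma smd: "norm z < 1 \<Longrightarrow> summable (\<lambda>n. diffs c n * z^n)"
  using termdiff_converges[of z 1 c] smc by blast

lemma Hf_series:
  assumes q: "norm q < 1"
  shows "(\<lambda>n. diffs c n * q^n * complex_of_real (Beta (real n + 1) (3/2))) sums Hf f q"
proof -
  define g where "g n t = complex_of_real (sqrt (1-t)) * (diffs c n * (complex_of_real t * q)^n)" for n t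
  have "(\<lambda>n. integral {0..1} (g n)) sums integral {0..1} (\<lambda>t. \<Sum>n. g n t)"
  proof (rule series_integral_01)
    show "continuous_on {0..1} (g n)" for n unfolding g_def by (intro continuous_intros)
    show "summable (\<lambda>n. norm (diffs c n * q^n))"
      by (rule summable_norm_inside[OF smd q])
    fix n t assume t: "t \<in> {0..1::real}"
    have "norm (g n t) = sqrt (1-t) * (t^n * norm (diffs c n * q^n))"
      using t by (simp add: g_def norm_mult norm_power power_mult_distrib)
    also have "\<dots> \<le> 1 * (1 * norm (diffs c n * q^n))"
      using t by (intro mult_mono power_le_one) auto
    finally show "norm (g n t) \<le> norm (diffs c n * q^n)" by simp
  qed
  moreover have "integral {0..1} (g n) = diffs c n * q^n * complex_of_real (Beta (real n + 1) (3/2))" for n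
  proof -
    have "((\<lambda>t. (diffs c n * q^n) * complex_of_real (t^n * sqrt (1-t))) has_integral
        (diffs c n * q^n) * complex_of_real (Beta (real n + 1) (3/2))) {0..1}"
      by (intro has_integral_mult_right has_integral_of_real beta_int)
    moreover have "(\<lambda>t. (diffs c n * q^n) * complex_of_real (t^n * sqrt (1-t))) = g n"
      by (auto simp: g_def fun_eq_iff power_mult_distrib)
    ultimately show ?thesis by (simp add: integral_unique)
  qed
  moreover have "integral {0..1} (\<lambda>t. \<Sum>n. g n t) = Hf f q"
    unfolding Hf_def
  proof (rule integral_cong)
    fix t assume t: "t \<in> {0..1::real}"
    then have tq: "norm (complex_of_real t * q) < 1"
      using q by (auto simp: norm_mult intro: le_less_trans[OF mult_left_le_one_le])
    show "(\<Sum>n. g n t) = complex_of_real (sqrt (1-t)) * deriv f (complex_of_real t * q)"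
      unfolding g_def f_deriv[OF tq] using suminf_mult[OF smd[OF tq]] by simp
  qed
  ultimately show ?thesis by simp
qed

lemma Gf_series:
  assumes q: "norm q < 1"
  shows "(\<lambda>k. dc c k * q^k) sums Gf f q"
proof -
  have "(\<lambda>n. 2 * q * (diffs c n * q^n * complex_of_real (Beta (real n + 1) (3/2)))) sums (2 * q * Hf f q)"
    by (rule sums_mult[OF Hf_series[OF q]])
  moreover have "(\<lambda>n. dc c (Suc n) * q^(Suc n)) = (\<lambda>n. 2 * q * (diffs c n * q^n * complex_of_real (Beta (real n + 1) (3/2))))"
    by (auto simp: dc_def fun_eq_iff)
  ultimately have "(\<lambda>n. dc c (Suc n) * q^(Suc n)) sums (2 * q * Hf f q)" by simp
  from sums_Suc[OF this] have "(\<lambda>k. dc c k * q^k) sums (2 * q * Hf f q + dc c 0 * q^0)" .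
  moreover have "dc c 0 * q^0 = 2 * f 0" by (simp add: dc_def f0)
  ultimately show ?thesis unfolding Gf_def by (simp add: add.commute)
qed

lemma coef_eq:
  "dc c k / 2 + of_nat k * dc c k =
     complex_of_real (sqrt pi * Gamma (real k + 1) / Gamma (real k + 1/2)) * c k"
proof (cases k)
  case 0 then show ?thesis by (simp add: dc_def Gamma_one_half_real)
next
  case (Suc n)
  have "dc c k / 2 + of_nat k * dc c k = complex_of_real ((real n + 3/2) * 2 * (real n + 1) * Beta (real n + 1) (3/2)) * c (Suc n)"
  proof -
    define B where "B = Beta (real n + 1) (3/2)"
    have d: "dc c (Suc n) = 2 * (of_nat (Suc n) * c (Suc n)) * complex_of_real B"
      by (simp add: dc_def diffs_def B_def)
    have "complex_of_real ((real n + 3/2) * 2 * (real n + 1) * B) =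
        (of_nat n + 3/2) * 2 * (of_nat n + 1) * complex_of_real B" by simp
    then show ?thesis unfolding Suc d B_def[symmetric]
      by (simp add: algebra_simps)
  qed
  then show ?thesis unfolding gamma_coef Suc by simp
qed

lemma Kf_series:
  assumes p: "norm p < 1"
  shows "(\<lambda>k. complex_of_real (sqrt pi * Gamma (real k + 1) / Gamma (real k + 1/2)) * c k * p^k) sums Kf f p"
proof -
  have GS: "\<And>z. norm z < 1 \<Longrightarrow> (\<lambda>k. dc c k * z^k) sums Gf f z" using Gf_series by blast
  have dG: "deriv (Gf f) p = (\<Sum>n. diffs (dc c) n * p^n)"
    using powser_ball_deriv(1)[OF GS p] DERIV_imp_deriv by blast
  have s1: "(\<lambda>n. p * (diffs (dc c) n * p^n)) sums (p * deriv (Gf f) p)"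
    unfolding dG by (rule sums_mult[OF powser_ball_deriv(2)[OF GS p]])
  have "(\<lambda>n. of_nat (Suc n) * dc c (Suc n) * p^(Suc n)) = (\<lambda>n. p * (diffs (dc c) n * p^n))"
    by (auto simp: diffs_def fun_eq_iff)
  with s1 have "(\<lambda>n. of_nat (Suc n) * dc c (Suc n) * p^(Suc n)) sums (p * deriv (Gf f) p)" by simp
  from sums_Suc[OF this] have s2: "(\<lambda>k. of_nat k * dc c k * p^k) sums (p * deriv (Gf f) p)" by simp
  have s3: "(\<lambda>k. dc c k * p^k / 2) sums (Gf f p / 2)" by (rule sums_divide[OF GS[OF p]])
  have "(\<lambda>k. dc c k * p^k / 2 + of_nat k * dc c k * p^k) sums Kf f p"
    unfolding Kf_def by (rule sums_add[OF s3 s2])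
  moreover have "dc c k * p^k / 2 + of_nat k * dc c k * p^k =
      complex_of_real (sqrt pi * Gamma (real k + 1) / Gamma (real k + 1/2)) * c k * p^k" for k
  proof -
    have "dc c k * p^k / 2 + of_nat k * dc c k * p^k = (dc c k / 2 + of_nat k * dc c k) * p^k"
      by (simp add: distrib_right)
    then show ?thesis unfolding coef_eq by simp
  qed
  ultimately show ?thesis by simp
qed

lemma part1_pt:
  assumes p: "p \<in> ball 0 1"
  shows "(\<lambda>k. complex_of_real (sqrt pi * Gamma (real k + 1) / Gamma (real k + 1/2)) * c k * p^k) sums Aop f p"
proof -
  have "Aop f p = Kf f p"
    by (rule Aop_eq_Kf[OF f_holo]) (use p ball_star in auto)
  then show ?thesis using Kf_series p by simp
qed

end

lemma part1:
  "\<forall>(f::complex \<Rightarrow> complex) (c::nat \<Rightarrow> complex).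
      (\<forall>p\<in>ball 0 1. (\<lambda>k. c k * p ^ k) sums f p) \<longrightarrow>
      (\<forall>p\<in>ball 0 1. (\<lambda>k. complex_of_real (sqrt pi * Gamma (real k + 1) / Gamma (real k + 1/2))
                          * c k * p ^ k) sums Aop f p)"
  using part1_pt by blast


lemma powr_mhalf: assumes "w \<noteq> 0" shows "w powr (-1/2) = 1 / csqrt w"
proof -
  have "w powr (-1/2) = exp ((-1/2) * Ln w)" using assms by (simp add: powr_def)
  also have "(-1/2) * Ln w = - (Ln w / 2)" by simp
  also have "exp (- (Ln w / 2)) = inverse (exp (Ln w / 2))" by (rule exp_minus)
  also have "\<dots> = 1 / csqrt w" using csqrt_exp_Ln[OF assms] by (simp add: inverse_eq_divide)
  finally show ?thesis .
qed

definition Ecoef :: "nat \<Rightarrow> real" where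
  "Ecoef k = sqrt pi * Gamma (real k + 1) / Gamma (real k + 1/2)"

lemma Ecoef_Suc: "Ecoef (Suc k) * (real k + 1/2) = Ecoef k * (real k + 1)"
proof -
  have g1: "Gamma (real k + 2) = (real k + 1) * Gamma (real k + 1)"
    using Gamma_plus1[OF pos_not_nonpos_Int, of "real k + 1"] by (simp add: add.assoc)
  have g2: "Gamma (real k + 3/2) = (real k + 1/2) * Gamma (real k + 1/2)"
    using Gamma_plus1[OF pos_not_nonpos_Int, of "real k + 1/2"] by (simp add: add.assoc)
  have p: "Gamma (real k + 1/2) > 0" "real k + 1/2 > 0" by simp_all
  have "real (Suc k) + 1 = real k + 2" "real (Suc k) + 1/2 = real k + 3/2" by simp_all
  then have e: "Ecoef (Suc k) = sqrt pi * Gamma (real k + 2) / Gamma (real k + 3/2)"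
    unfolding Ecoef_def by (simp only:)
  have "sqrt pi * ((real k + 1) * Gamma (real k + 1)) / ((real k + 1/2) * Gamma (real k + 1/2)) * (real k + 1/2)
      = sqrt pi * Gamma (real k + 1) / Gamma (real k + 1/2) * (real k + 1)"
    using p by simp
  then have "Ecoef (Suc k) * (real k + 1/2) = sqrt pi * Gamma (real k + 1) / Gamma (real k + 1/2) * (real k + 1)"
    by (simp only: e g1 g2)
  then show ?thesis by (simp only: Ecoef_def)
qed

lemma Ecoef_binom: "complex_of_real (Ecoef k) * (((-1/2::complex) gchoose k) * (-1)^k) = 1"
proof (induction k)
  case 0 then show ?case by (simp add: Ecoef_def Gamma_one_half_real)
next
  case (Suc k)
  define u where "u k = ((-1/2::complex) gchoose k) * (-1)^k" for k
  have r: "of_nat (Suc k) * u (Suc k) = (of_nat k + 1/2) * u k"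
  proof -
    define g where "g = ((-1/2::complex) gchoose k)"
    define G where "G = ((-1/2::complex) gchoose (Suc k))"
    have E: "(-1/2) * g = of_nat k * g + of_nat (Suc k) * G"
      using gbinomial_mult_1[of "-1/2::complex" k] unfolding g_def G_def .
    have h0: "of_nat (Suc k) * G = (-1/2) * g - of_nat k * g" unfolding E by simp
    have h1: "(-1/2) * g - of_nat k * g = - ((of_nat k + 1/2) * g)" by (simp add: algebra_simps)
    have h: "of_nat (Suc k) * G = - ((of_nat k + 1/2) * g)" using h0 h1 by simp
    have "of_nat (Suc k) * u (Suc k) = - (of_nat (Suc k) * G) * (-1)^k"
      unfolding u_def G_def by simp
    also have "\<dots> = (of_nat k + 1/2) * u k" unfolding h u_def g_def by simp
    finally show ?thesis .
  qed
  have e: "complex_of_real (Ecoef (Suc k)) * (of_nat k + 1/2) = complex_of_real (Ecoef k) * of_nat (Suc k)"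
    using arg_cong[OF Ecoef_Suc[of k], of complex_of_real] by simp
  have nz: "(of_nat k + 1/2 :: complex) \<noteq> 0" "(of_nat (Suc k) :: complex) \<noteq> 0"
  proof -
    have a: "(of_nat k + 1/2 :: complex) = complex_of_real (real k + 1/2)" by simp
    have "complex_of_real (real k + 1/2) \<noteq> 0"
      unfolding of_real_eq_0_iff by linarith
    then show "(of_nat k + 1/2 :: complex) \<noteq> 0" unfolding a .
    show "(of_nat (Suc k) :: complex) \<noteq> 0" by (simp only: of_nat_eq_0_iff)
  qed
  have "complex_of_real (Ecoef (Suc k)) * u (Suc k) * ((of_nat k + 1/2) * of_nat (Suc k))
      = complex_of_real (Ecoef k) * u k * ((of_nat k + 1/2) * of_nat (Suc k))"
  proof -
    have "complex_of_real (Ecoef (Suc k)) * u (Suc k) * ((of_nat k + 1/2) * of_nat (Suc k))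
       = (complex_of_real (Ecoef (Suc k)) * (of_nat k + 1/2)) * (of_nat (Suc k) * u (Suc k))"
      by (simp only: mult_ac)
    also have "\<dots> = (complex_of_real (Ecoef k) * of_nat (Suc k)) * ((of_nat k + 1/2) * u k)"
      unfolding e r ..
    also have "\<dots> = complex_of_real (Ecoef k) * u k * ((of_nat k + 1/2) * of_nat (Suc k))"
      by (simp only: mult_ac)
    finally show ?thesis .
  qed
  moreover have "(of_nat k + 1/2) * of_nat (Suc k) \<noteq> (0::complex)" using nz by simp
  ultimately have "complex_of_real (Ecoef (Suc k)) * u (Suc k) = complex_of_real (Ecoef k) * u k"
    by (rule mult_right_cancel[THEN iffD1, rotated])
  then show ?case using Suc unfolding u_def by simp
qed


definition Dx :: "real \<Rightarrow> complex set" where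
  "Dx x = {q. 1 - q * complex_of_real x \<notin> \<real>\<^sub>\<le>\<^sub>0}"

lemma Dx_iff: "q \<in> Dx x \<longleftrightarrow> \<not> (1 - Re q * x \<le> 0 \<and> Im q * x = 0)"
  by (simp add: Dx_def complex_nonpos_Reals_iff)

lemma Dx_open: "open (Dx x)"
proof -
  have "Dx x = (\<lambda>q. 1 - q * complex_of_real x) -` (- \<real>\<^sub>\<le>\<^sub>0)" by (auto simp: Dx_def)
  also have "open \<dots>"
    by (intro continuous_open_vimage open_Compl closed_nonpos_Reals_complex) (auto intro!: continuous_intros)
  finally show ?thesis .
qed

lemma Dx_ball: assumes "\<bar>x\<bar> \<le> 1" shows "ball 0 1 \<subseteq> Dx x"
proof
  fix q :: complex assume "q \<in> ball 0 1"
  then have "norm q < 1" by simp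
  then have "\<bar>Re q\<bar> < 1" using abs_Re_le_cmod le_less_trans by blast
  moreover have "\<bar>Re q\<bar> * \<bar>x\<bar> \<le> \<bar>Re q\<bar>" using assms by (intro mult_left_le) auto
  ultimately have "\<bar>Re q * x\<bar> < 1" by (simp add: abs_mult)
  then show "q \<in> Dx x" unfolding Dx_iff by auto
qed

lemma Dx_star: assumes "q \<in> Dx x" shows "closed_segment 0 q \<subseteq> Dx x"
proof
  fix w assume "w \<in> closed_segment 0 q"
  then obtain t where t: "0 \<le> t" "t \<le> 1" "w = complex_of_real t * q"
    by (auto simp: closed_segment_def scaleR_conv_of_real)
  show "w \<in> Dx x"
  proof (rule ccontr)
    assume "w \<notin> Dx x"
    then have h: "1 - t * (Re q * x) \<le> 0" "t * (Im q * x) = 0"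
      unfolding Dx_iff t(3) by (auto simp: algebra_simps)
    have tp: "t > 0" using h(1) t(1) by (cases "t = 0") auto
    have "Re q * x \<ge> 1"
    proof (rule ccontr)
      assume "\<not> Re q * x \<ge> 1"
      then have lt: "Re q * x < 1" by simp
      have "t * (Re q * x) < 1"
      proof (cases "Re q * x \<ge> 0")
        case True
        then have "t * (Re q * x) \<le> Re q * x" using t by (intro mult_left_le_one_le) auto
        then show ?thesis using lt by linarith
      next
        case False
        then have "Re q * x \<le> 0" by linarith
        then have "t * (Re q * x) \<le> 0" using mult_nonneg_nonpos[OF t(1)] by blast
        then show ?thesis by linarith
      qed
      then show False using h(1) by simp
    qed
    moreover have "Im q * x = 0" using h(2) tp by simp
    ultimately show False using assms unfolding Dx_iff by auto
  qed
qed

lemma Dx_mem: assumes "\<bar>x\<bar> \<le> 1" "p = 0 \<or> inverse p \<notin> complex_of_real ` {-1..1}"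
  shows "p \<in> Dx x"
proof (rule ccontr)
  assume "p \<notin> Dx x"
  then have h: "Re p * x \<ge> 1" "Im p * x = 0" unfolding Dx_iff by auto
  have x0: "x \<noteq> 0" using h by auto
  then have ip: "Im p = 0" using h(2) by simp
  have "1 \<le> \<bar>Re p * x\<bar>" using h by simp
  also have "\<dots> \<le> \<bar>Re p\<bar>" using assms(1) by (simp add: abs_mult mult_left_le)
  finally have rp: "1 \<le> \<bar>Re p\<bar>" .
  then have p0: "p \<noteq> 0" by auto
  have pe: "p = complex_of_real (Re p)" using ip by (simp add: complex_eq_iff)
  have "inverse p = complex_of_real (inverse (Re p))" by (subst pe) (simp add: of_real_inverse)
  moreover have "inverse (Re p) \<in> {-1..1}"
  proof -
    have "inverse \<bar>Re p\<bar> \<le> inverse 1" by (rule le_imp_inverse_le[OF rp]) simp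
    then have "\<bar>inverse (Re p)\<bar> \<le> 1" by (simp add: abs_inverse)
    then have "inverse (Re p) \<le> 1 \<and> - inverse (Re p) \<le> 1" by (simp only: abs_le_iff)
    then show ?thesis by auto
  qed
  ultimately have "inverse p \<in> complex_of_real ` {-1..1}" by (rule image_eqI)
  then show False using assms(2) p0 by blast
qed


lemma fx_holo: "(\<lambda>q. 1 / csqrt (1 - q * complex_of_real x)) holomorphic_on Dx x"
proof -
  have "(\<lambda>q. csqrt (1 - q * complex_of_real x)) holomorphic_on Dx x"
    by (rule holomorphic_on_csqrt') (auto intro!: holomorphic_intros simp: Dx_def)
  moreover have "csqrt (1 - q * complex_of_real x) \<noteq> 0" if "q \<in> Dx x" for q
    using that by (auto simp: Dx_def)
  ultimately show ?thesis by (intro holomorphic_intros) (auto simp: Dx_def)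
qed

lemma fx_series:
  assumes x: "\<bar>x\<bar> \<le> 1" and p: "p \<in> ball 0 1"
  shows "(\<lambda>k. (((-1/2::complex) gchoose k) * (- complex_of_real x)^k) * p^k) sums (1 / csqrt (1 - p * complex_of_real x))"
proof -
  have pD: "p \<in> Dx x" using Dx_ball[OF x] p by auto
  then have nz: "1 - p * complex_of_real x \<noteq> 0" by (auto simp: Dx_def)
  have "norm (- (p * complex_of_real x)) < 1"
  proof -
    have "norm (p * complex_of_real x) = norm p * \<bar>x\<bar>" by (simp add: norm_mult)
    also have "\<dots> \<le> norm p" using x by (intro mult_left_le) auto
    also have "\<dots> < 1" using p by simp
    finally show ?thesis by simp
  qed
  from gen_binomial_complex[OF this, of "-1/2"]
  have s0: "(\<lambda>n. ((-1/2::complex) gchoose n) * (- (p * complex_of_real x))^n) sums (1 + - (p * complex_of_real x)) powr (-1/2)" .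
  have e1: "(1 + - (p * complex_of_real x)) powr (-1/2) = 1 / csqrt (1 - p * complex_of_real x)"
    using powr_mhalf[OF nz] by simp
  have e2: "((-1/2::complex) gchoose n) * (- (p * complex_of_real x))^n =
     (((-1/2::complex) gchoose n) * (- complex_of_real x)^n) * p^n" for n
  proof -
    have "- (p * complex_of_real x) = p * (- complex_of_real x)" by simp
    then show ?thesis by (simp only: power_mult_distrib mult_ac)
  qed
  have "(\<lambda>n. ((-1/2::complex) gchoose n) * (- (p * complex_of_real x))^n) =
     (\<lambda>n. (((-1/2::complex) gchoose n) * (- complex_of_real x)^n) * p^n)"
    by (rule ext) (rule e2)
  with s0 e1 show ?thesis by simp
qed

lemma part3_ball:
  assumes x: "\<bar>x\<bar> \<le> 1" and p: "p \<in> ball 0 1"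
  shows "Aop (\<lambda>q. 1 / csqrt (1 - q * complex_of_real x)) p = 1 / (1 - p * complex_of_real x)"
proof -
  define c where "c k = ((-1/2::complex) gchoose k) * (- complex_of_real x)^k" for k
  have S: "\<forall>p\<in>ball 0 1. (\<lambda>k. c k * p ^ k) sums (\<lambda>q. 1 / csqrt (1 - q * complex_of_real x)) p"
    using fx_series[OF x] unfolding c_def by blast
  have s1: "(\<lambda>k. complex_of_real (sqrt pi * Gamma (real k + 1) / Gamma (real k + 1/2)) * c k * p^k)
      sums Aop (\<lambda>q. 1 / csqrt (1 - q * complex_of_real x)) p"
    by (rule part1_pt[OF S p])
  have eq: "complex_of_real (sqrt pi * Gamma (real k + 1) / Gamma (real k + 1/2)) * c k * p^k =
        (p * complex_of_real x)^k" for k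
  proof -
    have "complex_of_real (sqrt pi * Gamma (real k + 1) / Gamma (real k + 1/2)) * c k * p^k =
        (complex_of_real (Ecoef k) * (((-1/2::complex) gchoose k) * (-1)^k)) * (p * complex_of_real x)^k"
      unfolding c_def Ecoef_def by (simp add: power_mult_distrib algebra_simps flip: power_minus)
    then show ?thesis unfolding Ecoef_binom by simp
  qed
  have "norm (p * complex_of_real x) < 1"
  proof -
    have "norm (p * complex_of_real x) = norm p * \<bar>x\<bar>" by (simp add: norm_mult)
    also have "\<dots> \<le> norm p" using x by (intro mult_left_le) auto
    also have "\<dots> < 1" using p by simp
    finally show ?thesis .
  qed
  from geometric_sums[OF this] have "(\<lambda>k. (p * complex_of_real x)^k) sums (1 / (1 - p * complex_of_real x))" .
  with s1 show ?thesis unfolding eq using sums_unique2 by blast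
qed

lemma part3_pt:
  assumes x: "x \<in> {-1..1}" and p: "p = 0 \<or> inverse p \<notin> complex_of_real ` {-1..1}"
  shows "Aop (\<lambda>q. 1 / csqrt (1 - q * complex_of_real x)) p = 1 / (1 - p * complex_of_real x)"
proof -
  have ax: "\<bar>x\<bar> \<le> 1" using x by auto
  let ?f = "\<lambda>q. 1 / csqrt (1 - q * complex_of_real x)"
  have oD: "open (Dx x)" by (rule Dx_open)
  have st: "\<And>z. z \<in> Dx x \<Longrightarrow> closed_segment 0 z \<subseteq> Dx x" by (rule Dx_star)
  have 0: "0 \<in> Dx x" using Dx_ball[OF ax] by auto
  have h1: "Aop ?f holomorphic_on Dx x"
    by (rule holomorphic_transform[OF Kf_holo[OF fx_holo oD st]])
       (use Aop_eq_Kf[OF fx_holo oD st 0] in auto)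
  have h2: "(\<lambda>p. 1 / (1 - p * complex_of_real x)) holomorphic_on Dx x"
    by (intro holomorphic_intros) (auto simp: Dx_def)
  have conn: "connected (Dx x)"
    by (rule starlike_imp_connected) (use 0 st in \<open>auto simp: starlike_def\<close>)
  show ?thesis
    by (rule analytic_continuation_open[of "ball 0 1" "Dx x", OF _ oD _ conn Dx_ball[OF ax] h1 h2])
       (use part3_ball[OF ax] Dx_mem[OF ax p] in auto)
qed

lemma part3:
  "\<forall>(x::real) (p::complex). x \<in> {-1..1} \<and> (p = 0 \<or> inverse p \<notin> complex_of_real ` {-1..1}) \<longrightarrow>
      Aop (\<lambda>q. 1 / csqrt (1 - q * complex_of_real x)) p = 1 / (1 - p * complex_of_real x)"
  using part3_pt by blast


lemma holder_cont:
  assumes "holder_on S g" shows "continuous_on S g"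
proof -
  obtain C \<alpha> where a: "0 < \<alpha>" "\<alpha> \<le> 1" and h: "\<forall>x\<in>S. \<forall>y\<in>S. \<bar>g x - g y\<bar> \<le> C * \<bar>x - y\<bar> powr \<alpha>"
    using assms unfolding holder_on_def by blast
  show ?thesis unfolding continuous_on_iff
  proof (intro ballI allI impI)
    fix x e assume x: "x \<in> S" and e: "(0::real) < e"
    define C' where "C' = max C 1"
    have C': "C' > 0" "C \<le> C'" by (auto simp: C'_def)
    define d where "d = (e / C') powr (1/\<alpha>)"
    have d: "d > 0" using e C' by (simp add: d_def)
    show "\<exists>d>0. \<forall>x'\<in>S. dist x' x < d \<longrightarrow> dist (g x') (g x) < e"
    proof (intro exI[of _ d] conjI ballI impI d)
      fix y assume y: "y \<in> S" and dy: "dist y x < d"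
      have "\<bar>g y - g x\<bar> \<le> C * \<bar>y - x\<bar> powr \<alpha>" using h x y by blast
      also have "\<dots> \<le> C' * \<bar>y - x\<bar> powr \<alpha>" using C' by (intro mult_right_mono) auto
      also have "\<dots> < C' * d powr \<alpha>"
        using dy C' a by (intro mult_strict_left_mono powr_less_mono2) (auto simp: dist_real_def)
      also have "d powr \<alpha> = e / C'"
        using e C' a by (simp add: d_def powr_powr)
      also have "C' * (e / C') = e" using C' by simp
      finally show "dist (g y) (g x) < e" by (simp add: dist_real_def)
    qed
  qed
qed

lemma series_integral_ab:
  fixes g :: "nat \<Rightarrow> real \<Rightarrow> complex"
  assumes cont: "\<And>n. continuous_on {a..b} (g n)"
    and bnd: "\<And>n t. t \<in> {a..b} \<Longrightarrow> norm (g n t) \<le> M n" and sM: "summable M"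
  shows "(\<lambda>n. integral {a..b} (g n)) sums integral {a..b} (\<lambda>t. \<Sum>n. g n t)"
proof -
  have u: "uniform_limit {a..b} (\<lambda>n t. \<Sum>i<n. g i t) (\<lambda>t. \<Sum>i. g i t) sequentially"
    by (rule Weierstrass_m_test[OF bnd sM])
  have c: "continuous_on {a..b} (\<lambda>t. \<Sum>i<n. g i t)" for n
    by (intro continuous_on_sum cont)
  obtain I J where I: "\<And>n. ((\<lambda>t. \<Sum>i<n. g i t) has_integral I n) {a..b}"
    and J: "((\<lambda>t. \<Sum>i. g i t) has_integral J) {a..b}" and IJ: "I \<longlonglongrightarrow> J"
    using uniform_limit_integral[OF u c] by auto
  have gi: "(g i has_integral integral {a..b} (g i)) {a..b}" for i
    using cont integrable_continuous_interval integrable_integral by blast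
  have "((\<lambda>t. \<Sum>i<n. g i t) has_integral (\<Sum>i<n. integral {a..b} (g i))) {a..b}" for n
    by (rule has_integral_sum) (use gi in auto)
  then have "I n = (\<Sum>i<n. integral {a..b} (g i))" for n
    using I has_integral_unique by blast
  then have Ieq: "I = (\<lambda>n. \<Sum>i<n. integral {a..b} (g i))" by (rule ext)
  have "integral {a..b} (\<lambda>t. \<Sum>n. g n t) = J" by (rule integral_unique[OF J])
  then show ?thesis using IJ unfolding sums_def Ieq by simp
qed

lemma param_holo:
  fixes F :: "complex \<Rightarrow> real \<Rightarrow> complex"
  assumes U: "open U"
    and d: "\<And>z t. z \<in> U \<Longrightarrow> t \<in> {a..b} \<Longrightarrow> ((\<lambda>z. F z t) has_field_derivative F' z t) (at z)"
    and c: "\<And>z. z \<in> U \<Longrightarrow> continuous_on {a..b} (F z)"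
    and c': "continuous_on (U \<times> {a..b}) (\<lambda>(z, t). F' z t)"
  shows "(\<lambda>z. integral {a..b} (F z)) holomorphic_on U"
proof (rule holomorphic_on_local[OF U])
  fix z assume z: "z \<in> U"
  obtain e where e: "e > 0" "ball z e \<subseteq> U" using U z open_contains_ball by blast
  have "(\<lambda>z. integral (cbox a b) (F z)) holomorphic_on ball z e"
  proof (rule leibniz_rule_holomorphic)
    fix x t assume xt: "x \<in> ball z e" "t \<in> cbox a b"
    then have "x \<in> U" "t \<in> {a..b}" using e(2) by auto
    from d[OF this] show "((\<lambda>x. F x t) has_field_derivative F' x t) (at x within ball z e)"
      by (rule has_field_derivative_at_within)
  next
    fix x assume "x \<in> ball z e"
    then have "x \<in> U" using e(2) by auto
    then show "F x integrable_on cbox a b"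
      using c integrable_continuous_interval by auto
  next
    show "continuous_on (ball z e \<times> cbox a b) (\<lambda>(x, t). F' x t)"
    proof (rule continuous_on_subset[OF c'])
      show "ball z e \<times> cbox a b \<subseteq> U \<times> {a..b}" using e(2) by auto
    qed
  qed simp
  then show "\<exists>e>0. (\<lambda>z. integral {a..b} (F z)) holomorphic_on ball z e" using e(1) by auto
qed

definition D0 :: "complex set" where "D0 = {q. Im q \<noteq> 0 \<or> \<bar>Re q\<bar> < 1}"

lemma D0_sub: assumes "q \<in> D0" "x \<in> {-1..1}" shows "q \<in> Dx x"
proof (rule ccontr)
  assume "q \<notin> Dx x"
  then have h: "1 \<le> Re q * x" "Im q * x = 0" unfolding Dx_iff by auto
  then have "x \<noteq> 0" by auto
  then have "Im q = 0" using h by simp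
  then have r: "\<bar>Re q\<bar> < 1" using assms(1) by (auto simp: D0_def)
  have "\<bar>Re q\<bar> * \<bar>x\<bar> \<le> \<bar>Re q\<bar>" using assms(2) by (intro mult_left_le) auto
  then have "\<bar>Re q * x\<bar> \<le> \<bar>Re q\<bar>" by (simp add: abs_mult)
  then show False using h r by linarith
qed

lemma D0_open: "open D0"
proof -
  have "D0 = {q. Im q \<noteq> 0} \<union> {q. \<bar>Re q\<bar> < 1}" by (auto simp: D0_def)
  also have "open \<dots>"
    by (intro open_Un open_Collect_neq open_Collect_less continuous_intros)
  finally show ?thesis .
qed

lemma D0_star: assumes "q \<in> D0" shows "closed_segment 0 q \<subseteq> D0"
proof
  fix w assume "w \<in> closed_segment 0 q"
  then obtain t where t: "0 \<le> t" "t \<le> 1" "w = complex_of_real t * q"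
    by (auto simp: closed_segment_def scaleR_conv_of_real)
  show "w \<in> D0"
  proof (cases "t = 0")
    case True then show ?thesis using t by (simp add: D0_def)
  next
    case False
    then have tp: "t > 0" using t by simp
    show ?thesis
    proof (cases "Im q = 0")
      case True
      then have "\<bar>Re q\<bar> < 1" using assms by (simp add: D0_def)
      moreover have "\<bar>t * Re q\<bar> \<le> \<bar>Re q\<bar>" using t by (simp add: abs_mult mult_left_le_one_le)
      ultimately show ?thesis using t by (simp add: D0_def)
    next
      case False
      then show ?thesis using t tp by (simp add: D0_def)
    qed
  qed
qed

lemma D0_ball: "ball 0 1 \<subseteq> D0"
proof
  fix q :: complex assume "q \<in> ball 0 1"
  then have "\<bar>Re q\<bar> < 1" using abs_Re_le_cmod[of q] by simp
  then show "q \<in> D0" by (simp add: D0_def)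
qed

lemma D0_mem: assumes "p = 0 \<or> inverse p \<notin> complex_of_real ` {-1..1}" shows "p \<in> D0"
proof (rule ccontr)
  assume a: "p \<notin> D0"
  then have "Im p = 0" "1 \<le> \<bar>Re p\<bar>" by (auto simp: D0_def)
  then have "1 - Re p * sgn (Re p) \<le> 0 \<and> Im p * sgn (Re p) = 0"
    by (auto simp: sgn_if)
  then have "p \<notin> Dx (sgn (Re p))" unfolding Dx_iff by blast
  moreover have "\<bar>sgn (Re p)\<bar> \<le> 1" by (simp add: sgn_if)
  ultimately show False using Dx_mem[OF _ assms] by blast
qed


lemma csqrt_cont_D0:
  "continuous_on (D0 \<times> {-1..1}) (\<lambda>(p, x). csqrt (1 - p * complex_of_real x))"
proof -
  have "continuous_on (D0 \<times> {-1..1}) (\<lambda>px. 1 - fst px * complex_of_real (snd px))"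
    by (auto intro!: continuous_intros)
  moreover have "(\<lambda>px. 1 - fst px * complex_of_real (snd px)) ` (D0 \<times> {-1..1}) \<subseteq> - \<real>\<^sub>\<le>\<^sub>0"
    using D0_sub by (auto simp: Dx_def)
  ultimately have "continuous_on (D0 \<times> {-1..1}) (\<lambda>px. csqrt (1 - fst px * complex_of_real (snd px)))"
    by (rule continuous_on_compose2[OF continuous_on_csqrt])
  then show ?thesis by (simp add: case_prod_unfold)
qed

lemma nz_D0: "p \<in> D0 \<Longrightarrow> x \<in> {-1..1} \<Longrightarrow> 1 - p * complex_of_real x \<noteq> 0"
  using D0_sub by (fastforce simp: Dx_def)

lemma nzc_D0: "p \<in> D0 \<Longrightarrow> x \<in> {-1..1} \<Longrightarrow> csqrt (1 - p * complex_of_real x) \<noteq> 0"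
  using nz_D0 by simp

context
  fixes \<mu> :: "real \<Rightarrow> real"
  assumes cmu: "continuous_on {-1..1} \<mu>"
begin

definition "Qm p = integral {-1..1} (\<lambda>x. complex_of_real (\<mu> x) / csqrt (1 - p * complex_of_real x))"
definition "Rm p = integral {-1..1} (\<lambda>x. complex_of_real (\<mu> x) / (1 - p * complex_of_real x))"

lemma cmu2: "continuous_on (D0 \<times> {-1..1}) (\<lambda>(p, x). complex_of_real (\<mu> x))"
proof -
  have "continuous_on (D0 \<times> {-1..1}) (\<lambda>px. complex_of_real (\<mu> (snd px)))"
    by (intro continuous_intros continuous_on_compose2[OF cmu]) (auto intro!: continuous_intros)
  then show ?thesis by (simp add: case_prod_unfold)
qed

lemma Qm_holo: "Qm holomorphic_on D0"
  unfolding Qm_def[abs_def]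
proof (rule param_holo[OF D0_open])
  fix z t assume z: "z \<in> D0" and t: "t \<in> {-1..1::real}"
  have nd: "1 - z * complex_of_real t \<notin> \<real>\<^sub>\<le>\<^sub>0" using D0_sub[OF z t] by (simp add: Dx_def)
  show "((\<lambda>z. complex_of_real (\<mu> t) / csqrt (1 - z * complex_of_real t)) has_field_derivative
      complex_of_real (\<mu> t) * complex_of_real t / (2 * csqrt (1 - z * complex_of_real t) ^ 3)) (at z)"
    using nd nzc_D0[OF z t]
    by (auto intro!: derivative_eq_intros simp: power2_eq_square power3_eq_cube field_simps)
next
  fix z assume z: "z \<in> D0"
  have "continuous_on {-1..1} (\<lambda>x. csqrt (1 - z * complex_of_real x))"
  proof (rule continuous_on_compose2[OF continuous_on_csqrt])
    show "continuous_on {-1..1} (\<lambda>x. 1 - z * complex_of_real x)" by (intro continuous_intros)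
    show "(\<lambda>x. 1 - z * complex_of_real x) ` {-1..1} \<subseteq> - \<real>\<^sub>\<le>\<^sub>0" using D0_sub[OF z] by (auto simp: Dx_def)
  qed
  then show "continuous_on {-1..1} (\<lambda>x. complex_of_real (\<mu> x) / csqrt (1 - z * complex_of_real x))"
    using nzc_D0[OF z] by (intro continuous_intros cmu) auto
next
  show "continuous_on (D0 \<times> {-1..1}) (\<lambda>(z, t). complex_of_real (\<mu> t) * complex_of_real t / (2 * csqrt (1 - z * complex_of_real t) ^ 3))"
    using csqrt_cont_D0 cmu2 nzc_D0
    by (auto simp: case_prod_unfold intro!: continuous_intros)
qed

lemma Rm_holo: "Rm holomorphic_on D0"
  unfolding Rm_def[abs_def]
proof (rule param_holo[OF D0_open])
  fix z t assume z: "z \<in> D0" and t: "t \<in> {-1..1::real}"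
  show "((\<lambda>z. complex_of_real (\<mu> t) / (1 - z * complex_of_real t)) has_field_derivative
      complex_of_real (\<mu> t) * complex_of_real t / (1 - z * complex_of_real t) ^ 2) (at z)"
    using nz_D0[OF z t]
    by (auto intro!: derivative_eq_intros simp: power2_eq_square field_simps)
next
  fix z assume z: "z \<in> D0"
  show "continuous_on {-1..1} (\<lambda>x. complex_of_real (\<mu> x) / (1 - z * complex_of_real x))"
    using nz_D0[OF z] by (intro continuous_intros cmu) auto
next
  show "continuous_on (D0 \<times> {-1..1}) (\<lambda>(z, t). complex_of_real (\<mu> t) * complex_of_real t / (1 - z * complex_of_real t) ^ 2)"
    using cmu2 nz_D0
    by (auto simp: case_prod_unfold intro!: continuous_intros)
qed

lemma mu_bound: obtains B where "B \<ge> 0" "\<And>x. x \<in> {-1..1} \<Longrightarrow> \<bar>\<mu> x\<bar> \<le> B"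
proof -
  have "bounded (\<mu> ` {-1..1})"
    by (rule compact_imp_bounded[OF compact_continuous_image[OF cmu compact_Icc]])
  then obtain B where B: "\<forall>x\<in>{-1..1}. \<bar>\<mu> x\<bar> \<le> B" unfolding bounded_iff by auto
  moreover have "B \<ge> 0"
  proof -
    have "(0::real) \<in> {-1..1}" by simp
    then have "\<bar>\<mu> 0\<bar> \<le> B" using B by blast
    then show ?thesis by linarith
  qed
  ultimately show ?thesis using that by blast
qed

definition "cQ k = integral {-1..1} (\<lambda>x. complex_of_real (\<mu> x) * (((-1/2::complex) gchoose k) * (- complex_of_real x)^k))"

lemma gch_summable: "summable (\<lambda>n. norm (((-1/2::complex) gchoose n) * p^n))" if "norm p < 1"
proof (rule summable_norm_inside[OF _ that])
  fix z :: complex assume "norm z < 1"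
  from gen_binomial_complex[OF this] show "summable (\<lambda>k. ((-1/2::complex) gchoose k) * z^k)"
    by (rule sums_summable)
qed

lemma Qm_series: assumes p: "p \<in> ball 0 1" shows "(\<lambda>k. cQ k * p^k) sums Qm p"
proof -
  obtain B where B: "B \<ge> 0" "\<And>x. x \<in> {-1..1} \<Longrightarrow> \<bar>\<mu> x\<bar> \<le> B" using mu_bound by blast
  define g where "g n x = complex_of_real (\<mu> x) * ((((-1/2::complex) gchoose n) * (- complex_of_real x)^n) * p^n)" for n x
  have "(\<lambda>n. integral {-1..1} (g n)) sums integral {-1..1} (\<lambda>t. \<Sum>n. g n t)"
  proof (rule series_integral_ab)
    show "continuous_on {-1..1} (g n)" for n unfolding g_def by (intro continuous_intros cmu)
    show "summable (\<lambda>n. B * norm (((-1/2::complex) gchoose n) * p^n))"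
      using gch_summable[of p] p by (intro summable_mult) auto
    fix n t assume t: "t \<in> {-1..1::real}"
    have "norm (g n t) = \<bar>\<mu> t\<bar> * (\<bar>t\<bar>^n * norm (((-1/2::complex) gchoose n) * p^n))"
      by (simp add: g_def norm_mult norm_power)
    also have "\<dots> \<le> B * (1 * norm (((-1/2::complex) gchoose n) * p^n))"
      using t B by (intro mult_mono power_le_one) auto
    finally show "norm (g n t) \<le> B * norm (((-1/2::complex) gchoose n) * p^n)" by simp
  qed
  moreover have "integral {-1..1} (g n) = cQ n * p^n" for n
  proof -
    have "g n = (\<lambda>x. (complex_of_real (\<mu> x) * (((-1/2::complex) gchoose n) * (- complex_of_real x)^n)) * p^n)"
      unfolding g_def by (rule ext) (simp only: mult.assoc)
    then show ?thesis unfolding cQ_def by (simp only: integral_mult_left)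
  qed
  moreover have "integral {-1..1} (\<lambda>t. \<Sum>n. g n t) = Qm p"
    unfolding Qm_def
  proof (rule integral_cong)
    fix t assume t: "t \<in> {-1..1::real}"
    then have "\<bar>t\<bar> \<le> 1" by auto
    from sums_mult[OF fx_series[OF this p], of "complex_of_real (\<mu> t)"]
    show "(\<Sum>n. g n t) = complex_of_real (\<mu> t) / csqrt (1 - p * complex_of_real t)"
      unfolding g_def by (simp add: sums_iff)
  qed
  ultimately show ?thesis by simp
qed

definition "mk k = integral {-1..1} (\<lambda>x. complex_of_real (\<mu> x) * complex_of_real x ^ k)"

lemma Rm_series: assumes p: "p \<in> ball 0 1" shows "(\<lambda>k. mk k * p^k) sums Rm p"
proof -
  obtain B where B: "B \<ge> 0" "\<And>x. x \<in> {-1..1} \<Longrightarrow> \<bar>\<mu> x\<bar> \<le> B" using mu_bound by blast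
  define g where "g n x = complex_of_real (\<mu> x) * (p * complex_of_real x)^n" for n x
  have np: "norm p < 1" using p by simp
  have "(\<lambda>n. integral {-1..1} (g n)) sums integral {-1..1} (\<lambda>t. \<Sum>n. g n t)"
  proof (rule series_integral_ab)
    show "continuous_on {-1..1} (g n)" for n unfolding g_def by (intro continuous_intros cmu)
    show "summable (\<lambda>n. B * norm p ^ n)"
      using np by (intro summable_mult summable_geometric) auto
    fix n t assume t: "t \<in> {-1..1::real}"
    have "norm (g n t) = \<bar>\<mu> t\<bar> * (\<bar>t\<bar>^n * norm p ^ n)"
      by (simp add: g_def norm_mult norm_power power_mult_distrib)
    also have "\<dots> \<le> B * (1 * norm p ^ n)"
      using t B by (intro mult_mono power_le_one) auto
    finally show "norm (g n t) \<le> B * norm p ^ n" by simp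
  qed
  moreover have "integral {-1..1} (g n) = mk n * p^n" for n
  proof -
    have "g n = (\<lambda>x. (complex_of_real (\<mu> x) * complex_of_real x ^ n) * p^n)"
      unfolding g_def by (rule ext) (simp only: mult_ac power_mult_distrib)
    then show ?thesis unfolding mk_def by (simp only: integral_mult_left)
  qed
  moreover have "integral {-1..1} (\<lambda>t. \<Sum>n. g n t) = Rm p"
    unfolding Rm_def
  proof (rule integral_cong)
    fix t assume t: "t \<in> {-1..1::real}"
    have "norm (p * complex_of_real t) = norm p * \<bar>t\<bar>" by (simp add: norm_mult)
    also have "\<dots> \<le> norm p" using t by (intro mult_left_le) auto
    also have "\<dots> < 1" using np .
    finally have "norm (p * complex_of_real t) < 1" .
    from sums_mult[OF geometric_sums[OF this], of "complex_of_real (\<mu> t)"]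
    show "(\<Sum>n. g n t) = complex_of_real (\<mu> t) / (1 - p * complex_of_real t)"
      unfolding g_def by (simp add: sums_iff)
  qed
  ultimately show ?thesis by simp
qed

lemma coefQ: "complex_of_real (sqrt pi * Gamma (real k + 1) / Gamma (real k + 1/2)) * cQ k = mk k"
proof -
  have "complex_of_real (sqrt pi * Gamma (real k + 1) / Gamma (real k + 1/2)) * cQ k =
      integral {-1..1} (\<lambda>x. complex_of_real (Ecoef k) * (complex_of_real (\<mu> x) * (((-1/2::complex) gchoose k) * (- complex_of_real x)^k)))"
    unfolding cQ_def Ecoef_def by (simp only: integral_mult_right)
  also have "(\<lambda>x. complex_of_real (Ecoef k) * (complex_of_real (\<mu> x) * (((-1/2::complex) gchoose k) * (- complex_of_real x)^k)))
      = (\<lambda>x. complex_of_real (\<mu> x) * complex_of_real x ^ k * (complex_of_real (Ecoef k) * (((-1/2::complex) gchoose k) * (-1)^k)))"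
  proof (rule ext)
    fix x
    have "(- complex_of_real x)^k = (-1)^k * complex_of_real x ^ k" by (simp flip: power_mult_distrib)
    then show "complex_of_real (Ecoef k) * (complex_of_real (\<mu> x) * (((-1/2::complex) gchoose k) * (- complex_of_real x)^k))
      = complex_of_real (\<mu> x) * complex_of_real x ^ k * (complex_of_real (Ecoef k) * (((-1/2::complex) gchoose k) * (-1)^k))"
      by (simp only: mult_ac)
  qed
  also have "\<dots> = (\<lambda>x. complex_of_real (\<mu> x) * complex_of_real x ^ k)" unfolding Ecoef_binom by simp
  finally show ?thesis unfolding mk_def .
qed

lemma AQ_ball: assumes p: "p \<in> ball 0 1" shows "Aop Qm p = Rm p"
proof -
  have S: "\<forall>p\<in>ball 0 1. (\<lambda>k. cQ k * p ^ k) sums Qm p" using Qm_series by blast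
  from part1_pt[OF S p] have "(\<lambda>k. mk k * p ^ k) sums Aop Qm p" unfolding coefQ .
  then show ?thesis using Rm_series[OF p] sums_unique2 by blast
qed

lemma AQ_pt: assumes p: "p = 0 \<or> inverse p \<notin> complex_of_real ` {-1..1}" shows "Aop Qm p = Rm p"
proof -
  have st: "\<And>z. z \<in> D0 \<Longrightarrow> closed_segment 0 z \<subseteq> D0" by (rule D0_star)
  have 0: "0 \<in> D0" using D0_ball by auto
  have h1: "Aop Qm holomorphic_on D0"
    by (rule holomorphic_transform[OF Kf_holo[OF Qm_holo D0_open st]])
       (use Aop_eq_Kf[OF Qm_holo D0_open st 0] in auto)
  have conn: "connected D0"
    by (rule starlike_imp_connected) (use 0 st in \<open>auto simp: starlike_def\<close>)
  show ?thesis
    by (rule analytic_continuation_open[of "ball 0 1" D0, OF _ D0_open _ conn D0_ball h1 Rm_holo])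
       (use AQ_ball D0_mem[OF p] in auto)
qed

end


lemma shift_int:
  fixes f :: "real \<Rightarrow> complex"
  assumes "(f has_integral i) {a..b}"
  shows "((\<lambda>y. f (c + y)) has_integral i) {a - c..b - c}"
proof -
  have "((\<lambda>x. f (1 *\<^sub>R x + c)) has_integral (1 / \<bar>1\<bar> ^ DIM(real)) *\<^sub>R i) ((\<lambda>x. (1 / 1) *\<^sub>R x + - ((1 / 1) *\<^sub>R c)) ` cbox a b)"
    by (rule has_integral_affinity) (use assms in auto)
  moreover have "(\<lambda>x. (1 / 1) *\<^sub>R x + - ((1 / 1) *\<^sub>R c)) ` cbox a b = {a - c..b - c}"
    by (simp add: image_add_atLeastAtMost' algebra_simps)
  ultimately show ?thesis by (simp add: add.commute)
qed

lemma abs_powr_integrable: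
  assumes p: "p > -1" and c: "c \<ge> 0"
  shows "(\<lambda>y::real. \<bar>y\<bar> powr p) integrable_on {-c..c}"
proof -
  have h: "((\<lambda>x. x powr p) has_integral (c powr (p+1) / (p+1))) {0..c}"
    by (rule has_integral_powr_from_0[OF p c])
  have h1: "((\<lambda>x. \<bar>x\<bar> powr p) has_integral (c powr (p+1) / (p+1))) {0..c}"
    by (rule has_integral_spike_finite[OF _ _ h, of "{}"]) auto
  have h2: "((\<lambda>x. \<bar>x\<bar> powr p) has_integral (c powr (p+1) / (p+1))) {-c..0}"
    using has_integral_reflect_real[where f="\<lambda>x. \<bar>x\<bar> powr p" and a=0 and b=c] h1 by simp
  show ?thesis using has_integral_combine[OF _ _ h2 h1] c unfolding integrable_on_def by auto
qed

lemma clamp_lip: "\<bar>max (-1) (min 1 u) - max (-1) (min 1 v)\<bar> \<le> \<bar>u - v\<bar>" for u v :: real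
  by (auto simp: max_def min_def abs_if)

locale plem =
  fixes \<mu> :: "real \<Rightarrow> real" and K \<alpha> x0 :: real
  assumes hol: "\<And>x y. x \<in> {-1..1} \<Longrightarrow> y \<in> {-1..1} \<Longrightarrow> \<bar>\<mu> x - \<mu> y\<bar> \<le> K * \<bar>x - y\<bar> powr \<alpha>"
    and \<alpha>: "0 < \<alpha>" "\<alpha> \<le> 1" and K: "K \<ge> 0" and x0: "x0 \<in> {-1<..<1}"
begin

definition "mt u = \<mu> (max (-1) (min 1 u))"

lemma mt_eq: "x \<in> {-1..1} \<Longrightarrow> mt x = \<mu> x"
  by (simp add: mt_def)

lemma mt_hol: "\<bar>mt u - mt v\<bar> \<le> K * \<bar>u - v\<bar> powr \<alpha>"
proof -
  have "\<bar>mt u - mt v\<bar> \<le> K * \<bar>max (-1) (min 1 u) - max (-1) (min 1 v)\<bar> powr \<alpha>"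
    unfolding mt_def by (rule hol) auto
  also have "\<dots> \<le> K * \<bar>u - v\<bar> powr \<alpha>"
    using K \<alpha> by (intro mult_left_mono powr_mono2 clamp_lip) auto
  finally show ?thesis .
qed

lemma mt_cont: "continuous_on UNIV mt"
  by (rule holder_cont) (use \<alpha> mt_hol in \<open>auto simp: holder_on_def\<close>)

lemma mu_cont: "continuous_on {-1..1} \<mu>"
proof (rule holder_cont)
  show "holder_on {-1..1} \<mu>" unfolding holder_on_def
    by (rule exI[of _ K], rule exI[of _ \<alpha>]) (use \<alpha> hol in auto)
qed

definition "E = {-1 - x0, 1 - x0}"

definition "fz \<zeta> y = (if y \<in> E then 0 else if y \<in> {-1 - Re \<zeta>..1 - Re \<zeta>}
   then complex_of_real (mt (Re \<zeta> + y) - mt (Re \<zeta>)) / (\<i> * complex_of_real (Im \<zeta>) - complex_of_real y) else 0)"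

definition "Tt \<zeta> = integral {-3..3} (fz \<zeta>)"

lemma T_eq:
  assumes b: "Im \<zeta> \<noteq> 0" and a: "\<bar>Re \<zeta>\<bar> \<le> 2"
  shows "((\<lambda>x. complex_of_real (\<mu> x - mt (Re \<zeta>)) / (\<zeta> - complex_of_real x)) has_integral Tt \<zeta>) {-1..1}"
proof -
  define a where "a = Re \<zeta>"
  define \<phi> where "\<phi> x = complex_of_real (\<mu> x - mt a) / (\<zeta> - complex_of_real x)" for x
  have nz: "\<zeta> - complex_of_real x \<noteq> 0" for x
    using b by (auto simp: complex_eq_iff)
  have "continuous_on {-1..1} \<phi>" unfolding \<phi>_def
    using nz by (intro continuous_intros mu_cont) auto
  then have I: "(\<phi> has_integral integral {-1..1} \<phi>) {-1..1}"
    using integrable_continuous_interval integrable_integral by blast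
  from shift_int[OF I, of a]
  have "((\<lambda>y. \<phi> (a + y)) has_integral integral {-1..1} \<phi>) {-1 - a..1 - a}" .
  moreover have "{-1 - a..1 - a} \<inter> {-3..3} = {-1 - a..1 - a}" using a by (auto simp: a_def)
  ultimately have J0: "((\<lambda>y. if y \<in> {-1 - a..1 - a} then \<phi> (a + y) else 0) has_integral integral {-1..1} \<phi>) {-3..3}"
    using has_integral_restrict_Int[of "{-1 - a..1 - a}" "\<lambda>y. \<phi> (a + y)"] by simp
  have fin: "finite E" by (simp add: E_def)
  have eqs: "fz \<zeta> y = (if y \<in> {-1 - a..1 - a} then \<phi> (a + y) else 0)" if y: "y \<in> {-3..3} - E" for y
  proof -
    show "fz \<zeta> y = (if y \<in> {-1 - a..1 - a} then \<phi> (a + y) else 0)"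
    proof (cases "y \<in> {-1 - a..1 - a}")
      case True
      then have "a + y \<in> {-1..1}" by auto
      then have "mt (a + y) = \<mu> (a + y)" by (rule mt_eq)
      moreover have "\<zeta> - complex_of_real (a + y) = \<i> * complex_of_real (Im \<zeta>) - complex_of_real y"
        by (simp add: a_def complex_eq_iff)
      ultimately show ?thesis using True y by (simp add: fz_def \<phi>_def a_def)
    next
      case False
      have yE: "y \<notin> E" using y by simp
      have F2: "y \<notin> {-1 - Re \<zeta>..1 - Re \<zeta>}" using False by (simp add: a_def)
      show ?thesis unfolding fz_def if_not_P[OF yE] if_not_P[OF F2] if_not_P[OF False] ..
    qed
  qed
  have J: "(fz \<zeta> has_integral integral {-1..1} \<phi>) {-3..3}"
    by (rule has_integral_spike_finite[OF fin eqs J0])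
  then have "Tt \<zeta> = integral {-1..1} \<phi>" unfolding Tt_def by (rule integral_unique)
  then show ?thesis using I unfolding \<phi>_def a_def by simp
qed

definition "gl y = (if y \<in> E then 0 else if y \<in> {-1 - x0<..<1 - x0}
   then complex_of_real (mt (x0 + y) - mt x0) / (- complex_of_real y) else 0)"

definition "Lam = integral {-3..3} gl"

lemma fz_bound:
  assumes b: "Im \<zeta> \<noteq> 0"
  shows "norm (fz \<zeta> y) \<le> K * \<bar>y\<bar> powr (\<alpha> - 1)"
proof -
  have R: "0 \<le> K * \<bar>y\<bar> powr (\<alpha> - 1)" using K by simp
  show ?thesis
  proof (cases "y \<notin> E \<and> y \<in> {-1 - Re \<zeta>..1 - Re \<zeta>} \<and> y \<noteq> 0")
    case False
    then consider "y \<in> E" | "y \<notin> {-1 - Re \<zeta>..1 - Re \<zeta>}" | "y = 0" by blast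
    then show ?thesis
    proof cases
      case 1 then show ?thesis using R by (simp add: fz_def)
    next
      case 2 then have "fz \<zeta> y = 0" unfolding fz_def by (simp only: if_not_P if_False) simp
      then show ?thesis using R by simp
    next
      case 3 then show ?thesis using R by (simp add: fz_def)
    qed
  next
    case True
    then have y0: "\<bar>y\<bar> > 0" by simp
    define w where "w = \<i> * complex_of_real (Im \<zeta>) - complex_of_real y"
    have nw: "norm w \<ge> \<bar>y\<bar>"
    proof -
      have "\<bar>Re w\<bar> \<le> norm w" by (rule abs_Re_le_cmod)
      moreover have "Re w = - y" by (simp add: w_def)
      ultimately show ?thesis by simp
    qed
    have "norm (fz \<zeta> y) = \<bar>mt (Re \<zeta> + y) - mt (Re \<zeta>)\<bar> / norm w"
      using True by (simp add: fz_def w_def norm_divide del: of_real_diff flip: of_real_diff)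
    also have "\<dots> \<le> \<bar>mt (Re \<zeta> + y) - mt (Re \<zeta>)\<bar> / \<bar>y\<bar>"
    proof (rule divide_left_mono)
      show "\<bar>y\<bar> \<le> norm w" by (rule nw)
      show "0 < norm w * \<bar>y\<bar>" using nw y0 by (intro mult_pos_pos) auto
    qed simp
    also have "\<dots> \<le> K * \<bar>y\<bar> powr \<alpha> / \<bar>y\<bar>"
      using mt_hol[of "Re \<zeta> + y" "Re \<zeta>"] y0 by (intro divide_right_mono) auto
    also have "\<dots> = K * \<bar>y\<bar> powr (\<alpha> - 1)"
      using y0 by (simp add: powr_diff)
    finally show ?thesis .
  qed
qed

lemma fz_int:
  assumes b: "Im \<zeta> \<noteq> 0"
  shows "fz \<zeta> integrable_on {-3..3}"
proof -
  define a where "a = Re \<zeta>"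
  define \<psi> where "\<psi> y = complex_of_real (mt (a + y) - mt a) / (\<i> * complex_of_real (Im \<zeta>) - complex_of_real y)" for y
  have nz: "\<i> * complex_of_real (Im \<zeta>) - complex_of_real y \<noteq> 0" for y
    using b by (auto simp: complex_eq_iff)
  have mtc: "continuous_on A (\<lambda>y. mt (a + y))" for A
    by (rule continuous_on_compose2[OF mt_cont]) (auto intro!: continuous_intros)
  have "continuous_on A \<psi>" for A unfolding \<psi>_def
    using nz mtc by (intro continuous_intros) auto
  then have "\<psi> integrable_on ({-1 - a..1 - a} \<inter> {-3..3})"
    by (simp add: Int_atLeastAtMost integrable_continuous_interval)
  then have i0: "(\<lambda>y. if y \<in> {-1 - a..1 - a} then \<psi> y else 0) integrable_on {-3..3}"
    by (simp only: integrable_restrict_Int)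
  have fin: "finite E" by (simp add: E_def)
  have eqs: "fz \<zeta> y = (if y \<in> {-1 - a..1 - a} then \<psi> y else 0)" if "y \<in> {-3..3} - E" for y
    using that by (simp add: fz_def \<psi>_def a_def)
  show ?thesis by (rule integrable_spike_finite[OF fin eqs i0])
qed

lemma mt_isCont: "isCont mt z"
  using mt_cont continuous_on_eq_continuous_at open_UNIV by blast

lemma fz_conv:
  assumes S: "S \<longlonglongrightarrow> complex_of_real x0" and b: "\<And>n. Im (S n) \<noteq> 0"
  shows "(\<lambda>n. fz (S n) y) \<longlonglongrightarrow> gl y"
proof -
  have ReS: "(\<lambda>n. Re (S n)) \<longlonglongrightarrow> x0" using tendsto_Re[OF S] by simp
  have ImS: "(\<lambda>n. Im (S n)) \<longlonglongrightarrow> 0" using tendsto_Im[OF S] by simp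
  consider "y \<in> E" | "y \<notin> E" "y \<in> {-1 - x0<..<1 - x0}" | "y < -1 - x0" | "y > 1 - x0"
    unfolding E_def by force
  then show ?thesis
  proof cases
    case 1 then show ?thesis by (simp add: fz_def gl_def)
  next
    case 2
    have ev1: "eventually (\<lambda>n. Re (S n) > -1 - y) sequentially"
      using order_tendstoD(1)[OF ReS, of "-1 - y"] 2 by auto
    have ev2: "eventually (\<lambda>n. Re (S n) < 1 - y) sequentially"
      using order_tendstoD(2)[OF ReS, of "1 - y"] 2 by auto
    have ev: "eventually (\<lambda>n. complex_of_real (mt (Re (S n) + y) - mt (Re (S n))) /
        (\<i> * complex_of_real (Im (S n)) - complex_of_real y) = fz (S n) y) sequentially"
      using ev1 ev2
    proof eventually_elim
      case (elim n)
      then have "y \<in> {-1 - Re (S n)..1 - Re (S n)}" by auto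
      then show ?case using 2 by (simp add: fz_def)
    qed
    have lim: "(\<lambda>n. complex_of_real (mt (Re (S n) + y) - mt (Re (S n))) /
        (\<i> * complex_of_real (Im (S n)) - complex_of_real y)) \<longlonglongrightarrow> gl y"
    proof (cases "y = 0")
      case True then show ?thesis by (simp add: gl_def)
    next
      case False
      have m1: "(\<lambda>n. mt (Re (S n) + y)) \<longlonglongrightarrow> mt (x0 + y)"
        by (rule isCont_tendsto_compose[OF mt_isCont]) (intro tendsto_intros ReS)
      have m2: "(\<lambda>n. mt (Re (S n))) \<longlonglongrightarrow> mt x0"
        by (rule isCont_tendsto_compose[OF mt_isCont ReS])
      have "(\<lambda>n. complex_of_real (mt (Re (S n) + y) - mt (Re (S n))) /
        (\<i> * complex_of_real (Im (S n)) - complex_of_real y)) \<longlonglongrightarrow>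
        complex_of_real (mt (x0 + y) - mt x0) / (\<i> * complex_of_real 0 - complex_of_real y)"
        using False by (intro tendsto_intros m1 m2 ImS) auto
      then show ?thesis using 2 by (simp add: gl_def)
    qed
    show ?thesis by (rule Lim_transform_eventually[OF lim ev])
  next
    case 3
    have ev: "eventually (\<lambda>n. Re (S n) < -1 - y) sequentially"
      using order_tendstoD(2)[OF ReS, of "-1 - y"] 3 by auto
    have "eventually (\<lambda>n. 0 = fz (S n) y) sequentially"
      using ev by eventually_elim (auto simp: fz_def)
    moreover have "gl y = 0" using 3 by (auto simp: gl_def)
    ultimately show ?thesis using Lim_transform_eventually[OF tendsto_const] by metis
  next
    case 4
    have ev: "eventually (\<lambda>n. Re (S n) > 1 - y) sequentially"
      using order_tendstoD(1)[OF ReS, of "1 - y"] 4 by auto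
    have "eventually (\<lambda>n. 0 = fz (S n) y) sequentially"
      using ev by eventually_elim (auto simp: fz_def)
    moreover have "gl y = 0" using 4 by (auto simp: gl_def)
    ultimately show ?thesis using Lim_transform_eventually[OF tendsto_const] by metis
  qed
qed

lemma Tt_lim: "(Tt \<longlongrightarrow> Lam) (at (complex_of_real x0) within {z. Im z \<noteq> 0})"
proof (rule Lim_within_LIMSEQ, intro allI impI)
  fix S assume a: "(\<forall>n. S n \<noteq> complex_of_real x0 \<and> S n \<in> {z. Im z \<noteq> 0}) \<and> S \<longlonglongrightarrow> complex_of_real x0"
  then have b: "\<And>n. Im (S n) \<noteq> 0" and S: "S \<longlonglongrightarrow> complex_of_real x0" by auto
  have h: "(\<lambda>y. K * \<bar>y\<bar> powr (\<alpha> - 1)) integrable_on {-3..3}"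
    using abs_powr_integrable[of "\<alpha> - 1" 3] \<alpha> by (intro integrable_on_mult_right) auto
  have "(\<lambda>k. integral {-3..3} (fz (S k))) \<longlonglongrightarrow> integral {-3..3} gl"
    by (rule dominated_convergence(2)[OF fz_int[OF b] h fz_bound[OF b] fz_conv[OF S b]])
  then show "(\<lambda>n. Tt (S n)) \<longlonglongrightarrow> Lam" by (simp add: Tt_def Lam_def)
qed

lemma L_int:
  assumes b: "Im \<zeta> \<noteq> 0"
  shows "((\<lambda>x. 1 / (\<zeta> - complex_of_real x)) has_integral (Ln (\<zeta> + 1) - Ln (\<zeta> - 1))) {-1..1}"
proof -
  have "((\<lambda>x. 1 / (\<zeta> - complex_of_real x)) has_integral
      ((\<lambda>x. - Ln (\<zeta> - complex_of_real x)) 1 - (\<lambda>x. - Ln (\<zeta> - complex_of_real x)) (-1))) {-1..1}"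
  proof (rule fundamental_theorem_of_calculus)
    fix x :: real assume "x \<in> {-1..1}"
    have nd: "\<zeta> - complex_of_real x \<notin> \<real>\<^sub>\<le>\<^sub>0" using b by (auto simp: complex_nonpos_Reals_iff)
    have "((\<lambda>z. - Ln (\<zeta> - z)) has_field_derivative 1 / (\<zeta> - complex_of_real x)) (at (complex_of_real x))"
      using nd by (auto intro!: derivative_eq_intros simp: field_simps)
    then show "((\<lambda>x. - Ln (\<zeta> - complex_of_real x)) has_vector_derivative 1 / (\<zeta> - complex_of_real x)) (at x within {-1..1})"
      by (rule has_vector_derivative_real_field)
  qed simp
  then show ?thesis by simp
qed

lemma Phi_dec:
  assumes b: "Im \<zeta> \<noteq> 0" and a: "\<bar>Re \<zeta>\<bar> \<le> 2"
  shows "integral {-1..1} (\<lambda>x. complex_of_real (\<mu> x) / (\<zeta> - complex_of_real x)) =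
    Tt \<zeta> + complex_of_real (mt (Re \<zeta>)) * (Ln (\<zeta> + 1) - Ln (\<zeta> - 1))"
proof -
  have nz: "\<zeta> - complex_of_real x \<noteq> 0" for x
    using b by (auto simp: complex_eq_iff)
  have "((\<lambda>x. complex_of_real (\<mu> x - mt (Re \<zeta>)) / (\<zeta> - complex_of_real x)
      + complex_of_real (mt (Re \<zeta>)) * (1 / (\<zeta> - complex_of_real x))) has_integral
      Tt \<zeta> + complex_of_real (mt (Re \<zeta>)) * (Ln (\<zeta> + 1) - Ln (\<zeta> - 1))) {-1..1}"
    by (intro has_integral_add T_eq[OF b a] has_integral_mult_right L_int[OF b])
  moreover have "(\<lambda>x. complex_of_real (\<mu> x - mt (Re \<zeta>)) / (\<zeta> - complex_of_real x)
      + complex_of_real (mt (Re \<zeta>)) * (1 / (\<zeta> - complex_of_real x))) =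
      (\<lambda>x. complex_of_real (\<mu> x) / (\<zeta> - complex_of_real x))"
  proof (rule ext)
    fix x
    show "complex_of_real (\<mu> x - mt (Re \<zeta>)) / (\<zeta> - complex_of_real x)
      + complex_of_real (mt (Re \<zeta>)) * (1 / (\<zeta> - complex_of_real x)) =
      complex_of_real (\<mu> x) / (\<zeta> - complex_of_real x)"
      using nz[of x] by (simp add: divide_simps)
  qed
  ultimately show ?thesis by (simp add: integral_unique)
qed

definition "Lbase = Ln (complex_of_real (1 + x0)) - Ln (complex_of_real (1 - x0))"

lemma Ln_shift_up: "Im \<zeta> > 0 \<Longrightarrow> Ln (\<zeta> - 1) = Ln (1 - \<zeta>) + \<i> * pi"
  using Ln_minus[of "1 - \<zeta>"] by (auto simp: complex_eq_iff)

lemma Ln_shift_down: "Im \<zeta> < 0 \<Longrightarrow> Ln (\<zeta> - 1) = Ln (1 - \<zeta>) - \<i> * pi"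
  using Ln_minus[of "1 - \<zeta>"] by (auto simp: complex_eq_iff)

lemma base_lim: "((\<lambda>\<zeta>. Ln (\<zeta> + 1) - Ln (1 - \<zeta>)) \<longlongrightarrow> Lbase) (at (complex_of_real x0))"
proof -
  have p1: "complex_of_real x0 + 1 \<notin> \<real>\<^sub>\<le>\<^sub>0" using x0 by (auto simp: complex_nonpos_Reals_iff)
  have p2: "1 - complex_of_real x0 \<notin> \<real>\<^sub>\<le>\<^sub>0" using x0 by (auto simp: complex_nonpos_Reals_iff)
  have "isCont (\<lambda>\<zeta>. Ln (\<zeta> + 1) - Ln (1 - \<zeta>)) (complex_of_real x0)"
    using p1 p2 by (intro continuous_intros isCont_Ln') auto
  then have "((\<lambda>\<zeta>. Ln (\<zeta> + 1) - Ln (1 - \<zeta>)) \<longlongrightarrow> Ln (complex_of_real x0 + 1) - Ln (1 - complex_of_real x0)) (at (complex_of_real x0))"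
    by (simp add: isCont_def)
  moreover have "Ln (complex_of_real x0 + 1) - Ln (1 - complex_of_real x0) = Lbase"
    by (simp add: Lbase_def add.commute)
  ultimately show ?thesis by simp
qed

lemma F_lim:
  assumes H: "H \<subseteq> {z. Im z \<noteq> 0}"
    and sh: "\<And>\<zeta>. \<zeta> \<in> H \<Longrightarrow> Ln (\<zeta> - 1) = Ln (1 - \<zeta>) + c"
  shows "((\<lambda>\<zeta>. \<zeta> * integral {-1..1} (\<lambda>x. complex_of_real (\<mu> x) / (\<zeta> - complex_of_real x))) \<longlongrightarrow>
      complex_of_real x0 * (Lam + complex_of_real (\<mu> x0) * (Lbase - c))) (at (complex_of_real x0) within H)"
proof -
  have m0: "mt x0 = \<mu> x0" using x0 by (intro mt_eq) auto
  have T: "(Tt \<longlongrightarrow> Lam) (at (complex_of_real x0) within H)"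
    by (rule tendsto_within_subset[OF Tt_lim H])
  have B: "((\<lambda>\<zeta>. Ln (\<zeta> + 1) - Ln (1 - \<zeta>)) \<longlongrightarrow> Lbase) (at (complex_of_real x0) within H)"
    by (rule tendsto_within_subset[OF base_lim]) simp
  have M: "((\<lambda>\<zeta>. complex_of_real (mt (Re \<zeta>))) \<longlongrightarrow> complex_of_real (mt x0)) (at (complex_of_real x0) within H)"
  proof -
    have "isCont (\<lambda>\<zeta>. complex_of_real (mt (Re \<zeta>))) (complex_of_real x0)"
      by (intro continuous_intros isCont_o2[OF _ mt_isCont] continuous_Re continuous_ident)
    then have "((\<lambda>\<zeta>. complex_of_real (mt (Re \<zeta>))) \<longlongrightarrow> complex_of_real (mt (Re (complex_of_real x0)))) (at (complex_of_real x0))"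
      by (simp add: isCont_def)
    then have "((\<lambda>\<zeta>. complex_of_real (mt (Re \<zeta>))) \<longlongrightarrow> complex_of_real (mt x0)) (at (complex_of_real x0))"
      by simp
    then show ?thesis by (rule tendsto_within_subset) simp
  qed
  have "((\<lambda>\<zeta>. \<zeta> * (Tt \<zeta> + complex_of_real (mt (Re \<zeta>)) * ((Ln (\<zeta> + 1) - Ln (1 - \<zeta>)) - c))) \<longlongrightarrow>
      complex_of_real x0 * (Lam + complex_of_real (mt x0) * (Lbase - c))) (at (complex_of_real x0) within H)"
    by (intro tendsto_intros T B M)
  moreover have "eventually (\<lambda>\<zeta>. \<zeta> * (Tt \<zeta> + complex_of_real (mt (Re \<zeta>)) * ((Ln (\<zeta> + 1) - Ln (1 - \<zeta>)) - c)) =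
      \<zeta> * integral {-1..1} (\<lambda>x. complex_of_real (\<mu> x) / (\<zeta> - complex_of_real x))) (at (complex_of_real x0) within H)"
    unfolding eventually_at
  proof (intro exI[of _ 1] conjI ballI impI)
    fix \<zeta> assume z: "\<zeta> \<in> H" and d: "\<zeta> \<noteq> complex_of_real x0 \<and> dist \<zeta> (complex_of_real x0) < 1"
    have b: "Im \<zeta> \<noteq> 0" using z H by auto
    have "\<bar>Re \<zeta> - x0\<bar> \<le> dist \<zeta> (complex_of_real x0)"
      using abs_Re_le_cmod[of "\<zeta> - complex_of_real x0"] by (simp add: dist_norm)
    then have a: "\<bar>Re \<zeta>\<bar> \<le> 2" using d x0 by auto
    show "\<zeta> * (Tt \<zeta> + complex_of_real (mt (Re \<zeta>)) * ((Ln (\<zeta> + 1) - Ln (1 - \<zeta>)) - c)) =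
      \<zeta> * integral {-1..1} (\<lambda>x. complex_of_real (\<mu> x) / (\<zeta> - complex_of_real x))"
      unfolding Phi_dec[OF b a] sh[OF z] by (simp add: algebra_simps)
  qed simp
  ultimately show ?thesis unfolding m0 by (rule Lim_transform_eventually)
qed

lemma plem_main:
  "\<exists>Lp Lm.
     ((\<lambda>\<zeta>. \<zeta> * integral {-1..1} (\<lambda>x. complex_of_real (\<mu> x) / (\<zeta> - complex_of_real x))) \<longlongrightarrow> Lp) (at (complex_of_real x0) within {z. Im z > 0})
   \<and> ((\<lambda>\<zeta>. \<zeta> * integral {-1..1} (\<lambda>x. complex_of_real (\<mu> x) / (\<zeta> - complex_of_real x))) \<longlongrightarrow> Lm) (at (complex_of_real x0) within {z. Im z < 0})
   \<and> Lp - Lm = - 2 * complex_of_real pi * \<i> * complex_of_real x0 * complex_of_real (\<mu> x0)"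
proof (intro exI conjI)
  show "((\<lambda>\<zeta>. \<zeta> * integral {-1..1} (\<lambda>x. complex_of_real (\<mu> x) / (\<zeta> - complex_of_real x))) \<longlongrightarrow>
      complex_of_real x0 * (Lam + complex_of_real (\<mu> x0) * (Lbase - \<i> * pi))) (at (complex_of_real x0) within {z. Im z > 0})"
    by (rule F_lim) (auto simp: Ln_shift_up)
  show "((\<lambda>\<zeta>. \<zeta> * integral {-1..1} (\<lambda>x. complex_of_real (\<mu> x) / (\<zeta> - complex_of_real x))) \<longlongrightarrow>
      complex_of_real x0 * (Lam + complex_of_real (\<mu> x0) * (Lbase - (- \<i> * pi)))) (at (complex_of_real x0) within {z. Im z < 0})"
    by (rule F_lim) (auto simp: Ln_shift_down)
  show "complex_of_real x0 * (Lam + complex_of_real (\<mu> x0) * (Lbase - \<i> * pi)) -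
      complex_of_real x0 * (Lam + complex_of_real (\<mu> x0) * (Lbase - (- \<i> * pi))) =
      - 2 * complex_of_real pi * \<i> * complex_of_real x0 * complex_of_real (\<mu> x0)"
    by (simp add: algebra_simps)
qed

end


lemma part4:
  "\<forall>\<mu>::real \<Rightarrow> real. holder_on {-1..1} \<mu> \<longrightarrow>
      (let Q = (\<lambda>p. integral {-1..1} (\<lambda>x. complex_of_real (\<mu> x) / csqrt (1 - p * complex_of_real x)));
           F = (\<lambda>\<zeta>. \<zeta> * integral {-1..1} (\<lambda>x. complex_of_real (\<mu> x) / (\<zeta> - complex_of_real x)))
       in (\<forall>p. (p = 0 \<or> inverse p \<notin> complex_of_real ` {-1..1}) \<longrightarrow>
               Aop Q p = integral {-1..1} (\<lambda>x. complex_of_real (\<mu> x) / (1 - p * complex_of_real x)))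
        \<and> (\<forall>x0\<in>{-1<..<1} - {0::real}. \<exists>Lp Lm.
               (F \<longlongrightarrow> Lp) (at (complex_of_real x0) within {z. Im z > 0})
             \<and> (F \<longlongrightarrow> Lm) (at (complex_of_real x0) within {z. Im z < 0})
             \<and> Lp - Lm = - 2 * complex_of_real pi * \<i> * complex_of_real x0 * complex_of_real (\<mu> x0)))"
proof (intro allI impI)
  fix \<mu> :: "real \<Rightarrow> real" assume h: "holder_on {-1..1} \<mu>"
  have cmu: "continuous_on {-1..1} \<mu>" by (rule holder_cont[OF h])
  obtain C \<alpha> where a: "0 < \<alpha>" "\<alpha> \<le> 1" and hc: "\<forall>x\<in>{-1..1}. \<forall>y\<in>{-1..1}. \<bar>\<mu> x - \<mu> y\<bar> \<le> C * \<bar>x - y\<bar> powr \<alpha>"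
    using h unfolding holder_on_def by blast
  have hK: "\<bar>\<mu> x - \<mu> y\<bar> \<le> max C 0 * \<bar>x - y\<bar> powr \<alpha>" if "x \<in> {-1..1}" "y \<in> {-1..1}" for x y
  proof -
    have "\<bar>\<mu> x - \<mu> y\<bar> \<le> C * \<bar>x - y\<bar> powr \<alpha>" using hc that by blast
    also have "\<dots> \<le> max C 0 * \<bar>x - y\<bar> powr \<alpha>" by (intro mult_right_mono) auto
    finally show ?thesis .
  qed
  have Qe: "(\<lambda>p. integral {-1..1} (\<lambda>x. complex_of_real (\<mu> x) / csqrt (1 - p * complex_of_real x))) = Qm \<mu>"
    by (rule ext) (simp add: Qm_def[OF cmu])
  have P1: "\<forall>p. (p = 0 \<or> inverse p \<notin> complex_of_real ` {-1..1}) \<longrightarrow>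
     Aop (\<lambda>p. integral {-1..1} (\<lambda>x. complex_of_real (\<mu> x) / csqrt (1 - p * complex_of_real x))) p =
     integral {-1..1} (\<lambda>x. complex_of_real (\<mu> x) / (1 - p * complex_of_real x))"
    unfolding Qe using AQ_pt[OF cmu] by (simp add: Rm_def[OF cmu])
  have P2: "\<forall>x0\<in>{-1<..<1} - {0::real}. \<exists>Lp Lm.
       ((\<lambda>\<zeta>. \<zeta> * integral {-1..1} (\<lambda>x. complex_of_real (\<mu> x) / (\<zeta> - complex_of_real x))) \<longlongrightarrow> Lp) (at (complex_of_real x0) within {z. Im z > 0})
     \<and> ((\<lambda>\<zeta>. \<zeta> * integral {-1..1} (\<lambda>x. complex_of_real (\<mu> x) / (\<zeta> - complex_of_real x))) \<longlongrightarrow> Lm) (at (complex_of_real x0) within {z. Im z < 0})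
     \<and> Lp - Lm = - 2 * complex_of_real pi * \<i> * complex_of_real x0 * complex_of_real (\<mu> x0)"
  proof
    fix x0 assume x0: "x0 \<in> {-1<..<1} - {0::real}"
    interpret plem \<mu> "max C 0" \<alpha> x0
      by unfold_locales (use hK a x0 in auto)
    show "\<exists>Lp Lm.
       ((\<lambda>\<zeta>. \<zeta> * integral {-1..1} (\<lambda>x. complex_of_real (\<mu> x) / (\<zeta> - complex_of_real x))) \<longlongrightarrow> Lp) (at (complex_of_real x0) within {z. Im z > 0})
     \<and> ((\<lambda>\<zeta>. \<zeta> * integral {-1..1} (\<lambda>x. complex_of_real (\<mu> x) / (\<zeta> - complex_of_real x))) \<longlongrightarrow> Lm) (at (complex_of_real x0) within {z. Im z < 0})
     \<and> Lp - Lm = - 2 * complex_of_real pi * \<i> * complex_of_real x0 * complex_of_real (\<mu> x0)"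
      by (rule plem_main)
  qed
  show "let Q = (\<lambda>p. integral {-1..1} (\<lambda>x. complex_of_real (\<mu> x) / csqrt (1 - p * complex_of_real x)));
           F = (\<lambda>\<zeta>. \<zeta> * integral {-1..1} (\<lambda>x. complex_of_real (\<mu> x) / (\<zeta> - complex_of_real x)))
       in (\<forall>p. (p = 0 \<or> inverse p \<notin> complex_of_real ` {-1..1}) \<longrightarrow>
               Aop Q p = integral {-1..1} (\<lambda>x. complex_of_real (\<mu> x) / (1 - p * complex_of_real x)))
        \<and> (\<forall>x0\<in>{-1<..<1} - {0::real}. \<exists>Lp Lm.
               (F \<longlongrightarrow> Lp) (at (complex_of_real x0) within {z. Im z > 0})
             \<and> (F \<longlongrightarrow> Lm) (at (complex_of_real x0) within {z. Im z < 0})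
             \<and> Lp - Lm = - 2 * complex_of_real pi * \<i> * complex_of_real x0 * complex_of_real (\<mu> x0))"
    unfolding Let_def using P1 P2 by blast
qed

theorem mainTheorem10:
  shows
  "(\<forall>(f::complex \<Rightarrow> complex) (c::nat \<Rightarrow> complex).
      (\<forall>p\<in>ball 0 1. (\<lambda>k. c k * p ^ k) sums f p) \<longrightarrow>
      (\<forall>p\<in>ball 0 1. (\<lambda>k. complex_of_real (sqrt pi * Gamma (real k + 1) / Gamma (real k + 1/2))
                          * c k * p ^ k) sums Aop f p))
   \<and> (\<forall>(f::complex \<Rightarrow> complex) (D::complex set).
      open D \<and> ball 0 1 \<subseteq> D \<and> (\<forall>z\<in>D. closed_segment 0 z \<subseteq> D) \<and> f analytic_on D \<longrightarrow>
      Aop f analytic_on D)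
   \<and> (\<forall>(x::real) (p::complex). x \<in> {-1..1} \<and> (p = 0 \<or> inverse p \<notin> complex_of_real ` {-1..1}) \<longrightarrow>
      Aop (\<lambda>q. 1 / csqrt (1 - q * complex_of_real x)) p = 1 / (1 - p * complex_of_real x))
   \<and> (\<forall>\<mu>::real \<Rightarrow> real. holder_on {-1..1} \<mu> \<longrightarrow>
      (let Q = (\<lambda>p. integral {-1..1} (\<lambda>x. complex_of_real (\<mu> x) / csqrt (1 - p * complex_of_real x)));
           F = (\<lambda>\<zeta>. \<zeta> * integral {-1..1} (\<lambda>x. complex_of_real (\<mu> x) / (\<zeta> - complex_of_real x)))
       in (\<forall>p. (p = 0 \<or> inverse p \<notin> complex_of_real ` {-1..1}) \<longrightarrow>
               Aop Q p = integral {-1..1} (\<lambda>x. complex_of_real (\<mu> x) / (1 - p * complex_of_real x)))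
        \<and> (\<forall>x0\<in>{-1<..<1} - {0::real}. \<exists>Lp Lm.
               (F \<longlongrightarrow> Lp) (at (complex_of_real x0) within {z. Im z > 0})
             \<and> (F \<longlongrightarrow> Lm) (at (complex_of_real x0) within {z. Im z < 0})
             \<and> Lp - Lm = - 2 * complex_of_real pi * \<i> * complex_of_real x0 * complex_of_real (\<mu> x0))))"
  using part1 part2 part3 part4 by blast


end
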